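(* For an edge $t \overset{k}{—} t'$ in $\mathbb{T}_n$ and $\varepsilon\in \{\pm 1\}$, we have \[ \mu_{k;t}=\psi_{k;t}(\mathbf{\hat{Y}}_{k;t}^{\varepsilon})^{\varepsilon}\circ\phi_{k;t;\varepsilon}, \] where $\phi_{k;t;\varepsilon}$ is the unique $\mathbb{Z}[q^{\pm\frac{1}{2}}]$-algebra isomorphism from $\mathcal{F}_{t'}$ to $\mathcal{F}_{t}$ taking $\mathbf{X}_{t'}(\alpha)$ to $\mathbf{X}_{t}(E_{k,\varepsilon}^{\tilde{B}_{t}R}\alpha)$ for any $\alpha\in\mathbb{Z}^{m}$.
   Context: Setting: generalized quantum cluster algebras. Fix integers $m\ge n\ge 1$ and mutation data $(R,\mathbf{h})$: $R=\operatorname{diag}\{r_1,\dots,r_n\}$ with positive integers $r_k$, and for each $k\in[1,n]$ elements $h_{k,0}(q^{\frac12}),\dots,h_{k,r_k}(q^{\frac12})\in\mathbb{Z}[q^{\pm\frac12}]$ with $h_{k,s}=h_{k,r_k-s}$ and $h_{k,0}=h_{k,r_k}=1$. A compatible pair $(\tilde B,\Lambda)$ consists of an integer $m\times n$ matrix $\tilde B=(b_{ij})$ and a skew-symmetric integer $m\times m$ matrix $\Lambda=(\lambda_{ij})$ with $\tilde B^T\Lambda=[D\ 0]$, where $D=\operatorname{diag}\{d_1^{-1},\dots,d_n^{-1}\}$ has positive integer diagonal entries. $E_{k,\varepsilon}^{\tilde BR}$ is the $m\times m$ matrix equal to the identity except in its $k$-th column, whose entries are $-1$ in row $k$ and $[-\varepsilon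 b_{ik}r_k]_+$ in row $i\neq k$ (here $[b]_+=\max(b,0)$, applied entrywise to vectors). An $(R,\mathbf h)$-quantum seed pattern $t\mapsto\Sigma_t=(\mathbf X_t,\tilde B_t,\Lambda_t)$ over the $n$-regular tree $\mathbb{T}_n$ is fixed; for $\alpha=(a_1,\dots,a_m)^T\in\mathbb{Z}^m$, $\mathbf X_t(\alpha)=q^{\frac12\sum_{i<j}a_ia_j\lambda_{ji;t}}X_{1;t}^{a_1}\cdots X_{m;t}^{a_m}$, so $\mathbf X_t(\alpha)\mathbf X_t(\beta)=q^{\frac12\alpha^T\Lambda_t\beta}\mathbf X_t(\alpha+\beta)$. $\mathcal{T}_t$ is the quantum torus ($\mathbb{Z}[q^{\pm\frac12}]$-algebra spanned by the $\mathbf X_t(\alpha)$) and $\mathcal F_t$ its skew field of fractions. For $\alpha\in\mathbb{Z}^n$, $\hat{\mathbf Y}_t^\alpha:=\mathbf X_t(\tilde B_t\alpha)$ and $\hat{\mathbf Y}_{k;t}:=\hat{\mathbf Y}_t^{f_k}$ ($f_1,\dots,f_n$ standard basis of $\mathbb{Z}^n$; $e_1,\dots,e_m$ standard basis of $\mathbb{Z}^m$). For an edge $t\overset{k}{—}t'$, $\mu_{k;t}:\mathcal F_{t'}\to\mathcal F_t$ is the $\mathbb{Z}[q^{\pm\frac12}]$-algebra isomorphism with $\mu_{k;t}(\mathbf X_{t'}(e_i))=\mathbf X_t(e_i)$ for $i\ne k$ and $\mu_{k;t}(\mathbf X_{t'}(e_k))=\sum_{s=0}^{r_k}h_{k,s}(q^{\frac12})\mathbf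 X_t(s[\varepsilon\mathbf b_k]_++(r_k-s)[-\varepsilon\mathbf b_k]_+-e_k)$, $\mathbf b_k$ the $k$-th column of $\tilde B_t$ (independent of $\varepsilon$). For $a\in\mathbb{Z}$: $(\sum_{s=0}^{r_k}h_{k,s}(q^{\frac12})(q^{\frac b2}z)^s)^{\{a\}}$ is $\prod_{i=1}^a\sum_s h_{k,s}(q^{\frac12})(q^{\frac{b(2i-1)}2}z)^s$ if $a>0$, $1$ if $a=0$, and $\prod_{i=a}^{-1}(\sum_s h_{k,s}(q^{\frac12})(q^{\frac{b(2i+1)}2}z)^s)^{-1}$ if $a<0$; the exponent $-\{a\}$ denotes the inverse of this. With $(\mathbf u,\mathbf v)_D=\mathbf u^TD\mathbf v$ and $\bar\beta\in\mathbb{Z}^n$ the truncation of $\beta\in\mathbb{Z}^m$ to its first $n$ coordinates, $\psi_{k;t}(\hat{\mathbf Y}_t^\alpha):\mathcal F_t\to\mathcal F_t$ is the $\mathbb{Z}[q^{\pm\frac12}]$-algebra automorphism $\mathbf X_t(\beta)\mapsto\mathbf X_t(\beta)(\sum_{s=0}^{r_k}h_{k,s}(q^{\frac12})(q^{\frac1{2d_k}}\hat{\mathbf Y}_t^\alpha)^s)^{-\{d_k(\bar\beta,\alpha)_D\}}$; $\psi^{\varepsilon}$ means $\psi$ for $\varepsilon=1$ and its inverse for $\varepsilon=-1$. *)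

theory Defs
  imports Main
begin

text \<open>Indices are 0-based: rows/coordinates i < m, mutable indices k < n.
  Integer vectors in Z^m are functions nat => int vanishing at i >= m.
  Integer matrices are functions nat => nat => int (only entries below the bounds matter).
  The element v plays the role of q^(1/2).  Elements of Z[q^(+-1/2)] are finitely supported
  coefficient functions c :: int => int, c j being the coefficient of q^(j/2).\<close>

definition Zm :: "nat \<Rightarrow> (nat \<Rightarrow> int) set" where
  "Zm m = {\<alpha>. \<forall>i\<ge>m. \<alpha> i = 0}"

definition unitvec :: "nat \<Rightarrow> nat \<Rightarrow> int" where
  "unitvec i = (\<lambda>j. if j = i then 1 else 0)"

definition pospart :: "(nat \<Rightarrow> int) \<Rightarrow> nat \<Rightarrow> int" where
  "pospart \<alpha> = (\<lambda>i. max (\<alpha> i) 0)"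

definition col :: "nat \<Rightarrow> (nat \<Rightarrow> nat \<Rightarrow> int) \<Rightarrow> nat \<Rightarrow> nat \<Rightarrow> int" where
  "col m B k = (\<lambda>i. if i < m then B i k else 0)"

definition mulv :: "nat \<Rightarrow> (nat \<Rightarrow> nat \<Rightarrow> int) \<Rightarrow> (nat \<Rightarrow> int) \<Rightarrow> nat \<Rightarrow> int" where
  "mulv m M \<alpha> = (\<lambda>i. if i < m then (\<Sum>j<m. M i j * \<alpha> j) else 0)"

definition Emat :: "(nat \<Rightarrow> nat \<Rightarrow> int) \<Rightarrow> (nat \<Rightarrow> nat) \<Rightarrow> nat \<Rightarrow> int \<Rightarrow> nat \<Rightarrow> nat \<Rightarrow> int" where
  "Emat B r k \<epsilon> = (\<lambda>i j. if j = k then (if i = k then -1 else max (- \<epsilon> * B i k * int (r k)) 0)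
                          else (if i = j then 1 else 0))"

definition transp :: "(nat \<Rightarrow> nat \<Rightarrow> int) \<Rightarrow> nat \<Rightarrow> nat \<Rightarrow> int" where
  "transp M = (\<lambda>i j. M j i)"

definition matmul :: "nat \<Rightarrow> (nat \<Rightarrow> nat \<Rightarrow> int) \<Rightarrow> (nat \<Rightarrow> nat \<Rightarrow> int) \<Rightarrow> nat \<Rightarrow> nat \<Rightarrow> int" where
  "matmul m M N = (\<lambda>i j. \<Sum>l<m. M i l * N l j)"

text \<open>Compatible pair (B~, Lambda) with B~^T Lambda = [D 0], D = diag(delta_1..delta_n),
  delta_k = d_k^{-1} positive integers.\<close>
definition compatible_pair ::
  "nat \<Rightarrow> nat \<Rightarrow> (nat \<Rightarrow> nat \<Rightarrow> int) \<Rightarrow> (nat \<Rightarrow> nat \<Rightarrow> int) \<Rightarrow> (nat \<Rightarrow> int) \<Rightarrow> bool" where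
  "compatible_pair m n B \<Lambda> \<delta> \<longleftrightarrow>
     (\<forall>i<m. \<forall>j<m. \<Lambda> i j = - \<Lambda> j i) \<and> (\<forall>k<n. \<delta> k > 0) \<and>
     (\<forall>k<n. \<forall>j<m. (\<Sum>i<m. B i k * \<Lambda> i j) = (if j = k then \<delta> k else 0))"

definition mutation_data :: "nat \<Rightarrow> (nat \<Rightarrow> nat) \<Rightarrow> (nat \<Rightarrow> nat \<Rightarrow> int \<Rightarrow> int) \<Rightarrow> bool" where
  "mutation_data n r h \<longleftrightarrow>
     (\<forall>k<n. r k \<ge> 1 \<and> (\<forall>s\<le>r k. finite {j. h k s j \<noteq> 0}) \<and>
            (\<forall>s\<le>r k. h k s = h k (r k - s)) \<and>
            h k 0 = (\<lambda>j. if j = 0 then 1 else 0) \<and> h k (r k) = (\<lambda>j. if j = 0 then 1 else 0))"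

definition lev :: "'a::division_ring \<Rightarrow> (int \<Rightarrow> int) \<Rightarrow> 'a" where
  "lev v c = (\<Sum>j\<in>{j. c j \<noteq> 0}. of_int (c j) * v powi j)"

definition Xmon :: "'a::division_ring \<Rightarrow> nat \<Rightarrow> (nat \<Rightarrow> nat \<Rightarrow> int) \<Rightarrow> (nat \<Rightarrow> 'a) \<Rightarrow> (nat \<Rightarrow> int) \<Rightarrow> 'a" where
  "Xmon v m \<Lambda> X \<alpha> =
     v powi (\<Sum>j<m. \<Sum>i<j. \<alpha> i * \<alpha> j * \<Lambda> j i) * prod_list (map (\<lambda>i. X i powi \<alpha> i) [0..<m])"

text \<open>The division ring F is (an isomorphic copy of) the skew field of fractions of the quantum
  torus with quasi-commutation matrix Lambda over Z[q^(+-1/2)], q^(1/2) = v, with cluster X: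
  v central and nonzero, X_i X_j = q^(lambda_ij) X_j X_i, the elements v^j X(alpha) are
  Z-linearly independent (so the span is the quantum torus), and F is generated as a
  division ring by v and the X_i.\<close>
definition qtorus_frac :: "'a::division_ring \<Rightarrow> nat \<Rightarrow> (nat \<Rightarrow> nat \<Rightarrow> int) \<Rightarrow> (nat \<Rightarrow> 'a) \<Rightarrow> bool" where
  "qtorus_frac v m \<Lambda> X \<longleftrightarrow>
     v \<noteq> 0 \<and> (\<forall>y. v * y = y * v) \<and> (\<forall>i<m. X i \<noteq> 0) \<and>
     (\<forall>i<m. \<forall>j<m. X i * X j = v powi (2 * \<Lambda> i j) * X j * X i) \<and>
     (\<forall>S c. finite S \<longrightarrow> S \<subseteq> UNIV \<times> Zm m \<longrightarrow>
        (\<Sum>p\<in>S. of_int (c p) * v powi (fst p) * Xmon v m \<Lambda> X (snd p)) = 0 \<longrightarrow>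
        (\<forall>p\<in>S. c p = 0)) \<and>
     (\<forall>A. 0 \<in> A \<longrightarrow> 1 \<in> A \<longrightarrow> (\<forall>x\<in>A. \<forall>y\<in>A. x + y \<in> A \<and> x * y \<in> A) \<longrightarrow>
          (\<forall>x\<in>A. - x \<in> A \<and> inverse x \<in> A) \<longrightarrow> v \<in> A \<longrightarrow> (\<forall>i<m. X i \<in> A) \<longrightarrow> A = UNIV)"

text \<open>Z[q^(+-1/2)]-algebra homomorphism between division rings (q^(1/2) = v resp. w).\<close>
definition alg_hom :: "'b::division_ring \<Rightarrow> 'a::division_ring \<Rightarrow> ('b \<Rightarrow> 'a) \<Rightarrow> bool" where
  "alg_hom w v f \<longleftrightarrow> (\<forall>x y. f (x + y) = f x + f y) \<and> (\<forall>x y. f (x * y) = f x * f y) \<and>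
                      f 1 = 1 \<and> f w = v"

definition alg_iso :: "'b::division_ring \<Rightarrow> 'a::division_ring \<Rightarrow> ('b \<Rightarrow> 'a) \<Rightarrow> bool" where
  "alg_iso w v f \<longleftrightarrow> alg_hom w v f \<and> bij f"

text \<open>(sum_{s=0}^{r} h_s (q^{b/2} z)^s)^{a} for integer a, with q^(1/2) = v.\<close>
definition hpow :: "'a::division_ring \<Rightarrow> nat \<Rightarrow> (nat \<Rightarrow> int \<Rightarrow> int) \<Rightarrow> int \<Rightarrow> 'a \<Rightarrow> int \<Rightarrow> 'a" where
  "hpow v r hk b z a =
     (let P = (\<lambda>e. \<Sum>s\<le>r. lev v (hk s) * (v powi e * z) ^ s) in
      if a > 0 then prod_list (map (\<lambda>i. P (b * (2 * i - 1))) [1..a])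
      else if a = 0 then 1
      else prod_list (map (\<lambda>i. inverse (P (b * (2 * i + 1)))) [a..-1]))"

text \<open>psi_{k;t}(Y_{k;t}^eps) (alpha = eps f_k): the automorphism
  X(beta) |-> X(beta) (sum_s h_{k,s} (q^{1/(2 d_k)} Y^eps)^s)^{-{d_k (beta-bar, eps f_k)_D}},
  where d_k (beta-bar, eps f_k)_D = eps * beta_k and q^{1/(2 d_k)} = v^{delta_k}.\<close>
definition is_psi :: "'a::division_ring \<Rightarrow> nat \<Rightarrow> (nat \<Rightarrow> nat \<Rightarrow> int) \<Rightarrow> (nat \<Rightarrow> 'a)
    \<Rightarrow> (nat \<Rightarrow> nat \<Rightarrow> int) \<Rightarrow> (nat \<Rightarrow> int) \<Rightarrow> (nat \<Rightarrow> nat) \<Rightarrow> (nat \<Rightarrow> nat \<Rightarrow> int \<Rightarrow> int)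
    \<Rightarrow> nat \<Rightarrow> int \<Rightarrow> ('a \<Rightarrow> 'a) \<Rightarrow> bool" where
  "is_psi v m \<Lambda> X B \<delta> r h k \<epsilon> \<psi> \<longleftrightarrow>
     alg_iso v v \<psi> \<and>
     (\<forall>\<beta>\<in>Zm m. \<psi> (Xmon v m \<Lambda> X \<beta>) =
        Xmon v m \<Lambda> X \<beta> *
        inverse (hpow v (r k) (h k) (\<delta> k) (Xmon v m \<Lambda> X (\<lambda>i. \<epsilon> * col m B k i)) (\<epsilon> * \<beta> k)))"

end

theory Submission
  imports Defs "HOL-Library.FuncSet"
begin

definition central :: "'a::ring_1 \<Rightarrow> bool" where
  "central z \<longleftrightarrow> (\<forall>y. z * y = y * z)"

lemma central_1[simp]: "central 1"
  unfolding central_def by simp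
lemma central_0[simp]: "central 0"
  unfolding central_def by simp
lemma central_of_int[simp]: "central (of_int k)"
  by (auto simp: central_def mult_of_int_commute)
lemma central_mult[simp]: "central a \<Longrightarrow> central b \<Longrightarrow> central (a * b)"
  unfolding central_def by (metis mult.assoc)
lemma central_add[simp]: "central a \<Longrightarrow> central b \<Longrightarrow> central (a + b)"
  unfolding central_def by (metis distrib_left distrib_right)
lemma central_uminus[simp]: "central a \<Longrightarrow> central (- a)"
  unfolding central_def by (metis minus_mult_left minus_mult_right)
lemma central_power[simp]: "central a \<Longrightarrow> central (a ^ n)"
  by (induction n) auto
lemma central_inverse[simp]:
  fixes a :: "'a::division_ring"
  shows "central a \<Longrightarrow> central (inverse a)"
proof (cases "a = 0")
  case False
  assume c: "central a"
  show ?thesis unfolding central_def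
  proof
    fix y
    have "inverse a * y = inverse a * (y * a) * inverse a" using False
      by (simp add: mult.assoc)
    also have "\<dots> = inverse a * (a * y) * inverse a" using c unfolding central_def by metis
    also have "\<dots> = y * inverse a" using False by (simp add: mult.assoc[symmetric])
    finally show "inverse a * y = y * inverse a" .
  qed
qed simp
lemma central_powi[simp]:
  fixes a :: "'a::division_ring"
  shows "central a \<Longrightarrow> central (a powi j)"
  by (simp add: power_int_def)
lemma central_sum[simp]: "(\<And>x. x \<in> S \<Longrightarrow> central (f x)) \<Longrightarrow> central (sum f S)"
  by (induction S rule: infinite_finite_induct) auto
lemma centralD: "central a \<Longrightarrow> a * y = y * a"
  by (simp add: central_def)

lemma central_lcomm: "central c \<Longrightarrow> a * (c * b) = c * (a * b)"
  unfolding central_def by (metis mult.assoc)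
lemma central_comm: "central c \<Longrightarrow> a * c = c * a"
  unfolding central_def by metis

lemma comm_nat:
  fixes x y c :: "'a::division_ring"
  assumes "central c" "x * y = c * y * x"
  shows "x * y ^ n = c ^ n * y ^ n * x"
proof (induction n)
  case (Suc n)
  have "x * y ^ Suc n = (x * y ^ n) * y" by (simp only: power_Suc2 mult.assoc)
  also have "\<dots> = c ^ n * y ^ n * (x * y)" using Suc by (simp add: mult.assoc)
  also have "\<dots> = c ^ n * y ^ n * (c * y * x)" using assms by simp
  also have "\<dots> = (c ^ n * c) * (y ^ n * y) * x"
    using centralD[OF assms(1), of "y^n"] by (metis mult.assoc)
  finally show ?case by (simp only: power_Suc2)
qed simp

lemma comm_inv:
  fixes x y c :: "'a::division_ring"
  assumes "central c" "c \<noteq> 0" "y \<noteq> 0" "x * y = c * y * x"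
  shows "x * inverse y = inverse c * inverse y * x"
proof -
  have "inverse y * x * y = inverse y * (c * y * x)" using assms by (simp add: mult.assoc)
  also have "\<dots> = (inverse y * c) * y * x" by (simp only: mult.assoc)
  also have "\<dots> = c * (inverse y * y) * x" using centralD[OF assms(1), of "inverse y"]
    by (metis mult.assoc)
  also have "\<dots> = c * x" using assms by simp
  finally have 1: "inverse y * x * y = c * x" .
  have "inverse y * x = (inverse y * x * y) * inverse y" using assms(3)
    by (metis mult.assoc right_inverse mult_1_right)
  also have "\<dots> = c * x * inverse y" using 1 by simp
  finally have 2: "inverse y * x = c * x * inverse y" .
  have "inverse c * (inverse y * x) = (inverse c * c) * x * inverse y" using 2 by (simp add: mult.assoc)
  also have "\<dots> = x * inverse y" using assms by simp
  finally show ?thesis by (simp add: mult.assoc)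
qed

lemma comm_powi_right:
  fixes x y c :: "'a::division_ring"
  assumes "central c" "c \<noteq> 0" "y \<noteq> 0" "x * y = c * y * x"
  shows "x * y powi b = c powi b * y powi b * x"
proof (cases "b \<ge> 0")
  case True
  thus ?thesis using comm_nat[OF assms(1,4)] by (simp add: power_int_def)
next
  case False
  have "x * inverse y ^ nat (-b) = inverse c ^ nat (-b) * inverse y ^ nat (-b) * x"
    by (rule comm_nat) (use comm_inv[OF assms] assms in auto)
  thus ?thesis using False by (simp add: power_int_def)
qed

lemma comm_powi:
  fixes x y c :: "'a::division_ring"
  assumes "central c" "c \<noteq> 0" "y \<noteq> 0" "x \<noteq> 0" "x * y = c * y * x"
  shows "x powi a * y powi b = c powi (a * b) * y powi b * x powi a"
proof -
  define Y where "Y = y powi b"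
  define C where "C = c powi b"
  have cC: "central C" "C \<noteq> 0" using assms by (auto simp: C_def)
  have Y0: "Y \<noteq> 0" using assms by (auto simp: Y_def)
  have 1: "x * Y = C * Y * x" unfolding Y_def C_def by (rule comm_powi_right[OF assms(1,2,3,5)])
  have 2: "Y * x = inverse C * x * Y"
  proof -
    have "inverse C * (x * Y) = inverse C * (C * Y * x)" using 1 by simp
    also have "\<dots> = Y * x" using cC by (simp add: mult.assoc[symmetric])
    finally show ?thesis by (simp add: mult.assoc)
  qed
  have 3: "Y * x powi a = inverse C powi a * x powi a * Y"
    by (rule comm_powi_right) (use 2 cC assms in auto)
  have "C powi a * (Y * x powi a) = x powi a * Y"
    using cC by (simp add: 3 mult.assoc[symmetric] power_int_inverse)
  moreover have "C powi a = c powi (a * b)" unfolding C_def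
    by (simp add: power_int_mult[symmetric] mult.commute)
  ultimately have "c powi (a * b) * (Y * x powi a) = x powi a * Y" by simp
  thus ?thesis unfolding Y_def by (simp add: mult.assoc)
qed



definition Pm :: "nat \<Rightarrow> (nat \<Rightarrow> 'a::division_ring) \<Rightarrow> (nat \<Rightarrow> int) \<Rightarrow> 'a" where
  "Pm m X \<alpha> = prod_list (map (\<lambda>i. X i powi \<alpha> i) [0..<m])"
definition ee :: "nat \<Rightarrow> (nat \<Rightarrow> nat \<Rightarrow> int) \<Rightarrow> (nat \<Rightarrow> int) \<Rightarrow> int" where
  "ee m \<Lambda> \<alpha> = (\<Sum>j<m. \<Sum>i<j. \<alpha> i * \<alpha> j * \<Lambda> j i)"
definition cc :: "nat \<Rightarrow> (nat \<Rightarrow> nat \<Rightarrow> int) \<Rightarrow> (nat \<Rightarrow> int) \<Rightarrow> (nat \<Rightarrow> int) \<Rightarrow> int" where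
  "cc m \<Lambda> \<alpha> \<beta> = (\<Sum>j<m. \<Sum>i<j. 2 * \<alpha> j * \<beta> i * \<Lambda> j i)"
definition bil :: "nat \<Rightarrow> (nat \<Rightarrow> nat \<Rightarrow> int) \<Rightarrow> (nat \<Rightarrow> int) \<Rightarrow> (nat \<Rightarrow> int) \<Rightarrow> int" where
  "bil m \<Lambda> \<alpha> \<beta> = (\<Sum>i<m. \<Sum>j<m. \<alpha> i * \<Lambda> i j * \<beta> j)"

lemma Xmon_eq: "Xmon v m \<Lambda> X \<alpha> = v powi ee m \<Lambda> \<alpha> * Pm m X \<alpha>"
  by (simp add: Xmon_def ee_def Pm_def)

lemma Pm_Suc: "Pm (Suc m) X \<alpha> = Pm m X \<alpha> * X m powi \<alpha> m"
  by (simp add: Pm_def)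
lemma Pm_0[simp]: "Pm 0 X \<alpha> = 1"
  by (simp add: Pm_def)

lemma ee_Suc: "ee (Suc m) \<Lambda> \<alpha> = ee m \<Lambda> \<alpha> + (\<Sum>i<m. \<alpha> i * \<alpha> m * \<Lambda> m i)"
  by (simp add: ee_def)
lemma cc_Suc: "cc (Suc m) \<Lambda> \<alpha> \<beta> = cc m \<Lambda> \<alpha> \<beta> + (\<Sum>i<m. 2 * \<alpha> m * \<beta> i * \<Lambda> m i)"
  by (simp add: cc_def)
lemma bil_Suc: "bil (Suc m) \<Lambda> \<alpha> \<beta> = bil m \<Lambda> \<alpha> \<beta> + (\<Sum>i<m. \<alpha> i * \<Lambda> i m * \<beta> m)
          + (\<Sum>j<m. \<alpha> m * \<Lambda> m j * \<beta> j) + \<alpha> m * \<Lambda> m m * \<beta> m"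
proof -
  have "bil (Suc m) \<Lambda> \<alpha> \<beta> = (\<Sum>i<m. (\<Sum>j<m. \<alpha> i * \<Lambda> i j * \<beta> j) + \<alpha> i * \<Lambda> i m * \<beta> m)
      + ((\<Sum>j<m. \<alpha> m * \<Lambda> m j * \<beta> j) + \<alpha> m * \<Lambda> m m * \<beta> m)"
    unfolding bil_def by (simp only: sum.lessThan_Suc)
  thus ?thesis unfolding bil_def by (simp only: sum.distrib add.assoc)
qed

lemma arith_bil:
  assumes "\<forall>i<m. \<forall>j<m. \<Lambda> i j = - \<Lambda> j i"
  shows "ee m \<Lambda> \<alpha> + ee m \<Lambda> \<beta> + cc m \<Lambda> \<alpha> \<beta> - ee m \<Lambda> (\<lambda>i. \<alpha> i + \<beta> i) = bil m \<Lambda> \<alpha> \<beta>"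
  using assms
proof (induction m)
  case 0
  then show ?case by (simp add: ee_def cc_def bil_def)
next
  case (Suc m)
  have sk: "\<forall>i<m. \<forall>j<m. \<Lambda> i j = - \<Lambda> j i" using Suc.prems less_SucI by blast
  have "\<Lambda> m m = - \<Lambda> m m" using Suc.prems by blast
  hence d: "\<Lambda> m m = 0" by simp
  have sk2: "\<And>i. i < m \<Longrightarrow> \<Lambda> i m = - \<Lambda> m i" using Suc.prems less_SucI by blast
  have inc: "(\<Sum>i<m. \<alpha> i * \<alpha> m * \<Lambda> m i) + (\<Sum>i<m. \<beta> i * \<beta> m * \<Lambda> m i)
      + (\<Sum>i<m. 2 * \<alpha> m * \<beta> i * \<Lambda> m i) - (\<Sum>i<m. (\<alpha> i + \<beta> i) * (\<alpha> m + \<beta> m) * \<Lambda> m i)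
      = (\<Sum>i<m. \<alpha> m * \<beta> i * \<Lambda> m i - \<alpha> i * \<beta> m * \<Lambda> m i)"
    by (simp only: sum.distrib[symmetric] sum_subtractf[symmetric]) (rule sum.cong, auto simp: algebra_simps)
  have inc2: "(\<Sum>i<m. \<alpha> i * \<Lambda> i m * \<beta> m) + (\<Sum>j<m. \<alpha> m * \<Lambda> m j * \<beta> j) + \<alpha> m * \<Lambda> m m * \<beta> m
      = (\<Sum>i<m. \<alpha> m * \<beta> i * \<Lambda> m i - \<alpha> i * \<beta> m * \<Lambda> m i)"
  proof -
    have "(\<Sum>i<m. \<alpha> i * \<Lambda> i m * \<beta> m) = (\<Sum>i<m. - (\<alpha> i * \<beta> m * \<Lambda> m i))"
      by (rule sum.cong) (auto simp: sk2)
    moreover have "(\<Sum>j<m. \<alpha> m * \<Lambda> m j * \<beta> j) = (\<Sum>i<m. \<alpha> m * \<beta> i * \<Lambda> m i)"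
      by (rule sum.cong) auto
    ultimately show ?thesis using d by (simp add: sum_subtractf sum_negf)
  qed
  have "ee (Suc m) \<Lambda> \<alpha> + ee (Suc m) \<Lambda> \<beta> + cc (Suc m) \<Lambda> \<alpha> \<beta> - ee (Suc m) \<Lambda> (\<lambda>i. \<alpha> i + \<beta> i)
     = (ee m \<Lambda> \<alpha> + ee m \<Lambda> \<beta> + cc m \<Lambda> \<alpha> \<beta> - ee m \<Lambda> (\<lambda>i. \<alpha> i + \<beta> i))
       + ((\<Sum>i<m. \<alpha> i * \<alpha> m * \<Lambda> m i) + (\<Sum>i<m. \<beta> i * \<beta> m * \<Lambda> m i)
      + (\<Sum>i<m. 2 * \<alpha> m * \<beta> i * \<Lambda> m i) - (\<Sum>i<m. (\<alpha> i + \<beta> i) * (\<alpha> m + \<beta> m) * \<Lambda> m i))"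
    unfolding ee_Suc cc_Suc by simp
  also have "\<dots> = bil (Suc m) \<Lambda> \<alpha> \<beta>"
    unfolding inc bil_Suc Suc.IH[OF sk] inc2[symmetric] by simp
  finally show ?case .
qed

locale qt =
  fixes v :: "'a::division_ring" and m :: nat and \<Lambda> :: "nat \<Rightarrow> nat \<Rightarrow> int" and X :: "nat \<Rightarrow> 'a"
  assumes qf: "qtorus_frac v m \<Lambda> X"
    and skew: "\<forall>i<m. \<forall>j<m. \<Lambda> i j = - \<Lambda> j i"
begin

lemma v0: "v \<noteq> 0" and vc: "central v" and X0: "i < m \<Longrightarrow> X i \<noteq> 0"
  and rel: "i < m \<Longrightarrow> j < m \<Longrightarrow> X i * X j = v powi (2 * \<Lambda> i j) * X j * X i"
  using qf by (auto simp: qtorus_frac_def central_def)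

lemma vp_add: "v powi a * v powi b = v powi (a + b)"
  using v0 by (simp add: power_int_add)

lemma vpc: "central (v powi a)" using vc by simp

lemma move:
  assumes "m' \<le> j" "j < m"
  shows "X j powi a * Pm m' X \<beta> = v powi (\<Sum>i<m'. 2 * a * \<beta> i * \<Lambda> j i) * Pm m' X \<beta> * X j powi a"
  using assms(1)
proof (induction m')
  case 0
  then show ?case by simp
next
  case (Suc m')
  have IH: "X j powi a * Pm m' X \<beta> = v powi (\<Sum>i<m'. 2 * a * \<beta> i * \<Lambda> j i) * Pm m' X \<beta> * X j powi a"
    using Suc by simp
  have m'm: "m' < m" using Suc.prems assms by simp
  have c: "X j powi a * X m' powi \<beta> m' = v powi (2 * \<Lambda> j m' * (a * \<beta> m')) * X m' powi \<beta> m' * X j powi a"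
  proof -
    have "X j powi a * X m' powi \<beta> m' = (v powi (2 * \<Lambda> j m')) powi (a * \<beta> m') * X m' powi \<beta> m' * X j powi a"
      by (rule comm_powi) (use vc v0 X0 m'm assms rel in auto)
    thus ?thesis by (simp add: power_int_mult)
  qed
  have "X j powi a * Pm (Suc m') X \<beta> = (X j powi a * Pm m' X \<beta>) * X m' powi \<beta> m'"
    by (simp add: Pm_Suc mult.assoc)
  also have "\<dots> = v powi (\<Sum>i<m'. 2 * a * \<beta> i * \<Lambda> j i) * Pm m' X \<beta> * (X j powi a * X m' powi \<beta> m')"
    by (simp add: IH mult.assoc)
  also have "\<dots> = v powi (\<Sum>i<m'. 2 * a * \<beta> i * \<Lambda> j i) * Pm m' X \<beta> * (v powi (2 * \<Lambda> j m' * (a * \<beta> m')) * X m' powi \<beta> m' * X j powi a)"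
    by (simp add: c)
  also have "\<dots> = (v powi (\<Sum>i<m'. 2 * a * \<beta> i * \<Lambda> j i) * v powi (2 * \<Lambda> j m' * (a * \<beta> m'))) * (Pm m' X \<beta> * X m' powi \<beta> m') * X j powi a"
    using central_lcomm[OF vpc, of "Pm m' X \<beta>" "2 * \<Lambda> j m' * (a * \<beta> m')"] by (simp add: mult.assoc)
  also have "\<dots> = v powi (\<Sum>i<Suc m'. 2 * a * \<beta> i * \<Lambda> j i) * Pm (Suc m') X \<beta> * X j powi a"
    by (simp add: vp_add Pm_Suc algebra_simps)
  finally show ?case .
qed

lemma Pm_mult:
  assumes "m' \<le> m"
  shows "Pm m' X \<alpha> * Pm m' X \<beta> = v powi (cc m' \<Lambda> \<alpha> \<beta>) * Pm m' X (\<lambda>i. \<alpha> i + \<beta> i)"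
  using assms
proof (induction m')
  case 0
  then show ?case by (simp add: cc_def)
next
  case (Suc m')
  have m'm: "m' < m" using Suc by simp
  have IH: "Pm m' X \<alpha> * Pm m' X \<beta> = v powi (cc m' \<Lambda> \<alpha> \<beta>) * Pm m' X (\<lambda>i. \<alpha> i + \<beta> i)" using Suc by simp
  have mv: "X m' powi \<alpha> m' * Pm m' X \<beta> = v powi (\<Sum>i<m'. 2 * \<alpha> m' * \<beta> i * \<Lambda> m' i) * Pm m' X \<beta> * X m' powi \<alpha> m'"
    by (rule move) (use m'm in auto)
  have xx: "X m' powi \<alpha> m' * X m' powi \<beta> m' = X m' powi (\<alpha> m' + \<beta> m')"
    using X0[OF m'm] by (simp add: power_int_add)
  have "Pm (Suc m') X \<alpha> * Pm (Suc m') X \<beta> = Pm m' X \<alpha> * (X m' powi \<alpha> m' * Pm m' X \<beta>) * X m' powi \<beta> m'"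
    by (simp add: Pm_Suc mult.assoc)
  also have "\<dots> = Pm m' X \<alpha> * (v powi (\<Sum>i<m'. 2 * \<alpha> m' * \<beta> i * \<Lambda> m' i) * Pm m' X \<beta> * X m' powi \<alpha> m') * X m' powi \<beta> m'"
    by (simp add: mv)
  also have "\<dots> = v powi (\<Sum>i<m'. 2 * \<alpha> m' * \<beta> i * \<Lambda> m' i) * (Pm m' X \<alpha> * Pm m' X \<beta>) * (X m' powi \<alpha> m' * X m' powi \<beta> m')"
    using central_lcomm[OF vpc, of "Pm m' X \<alpha>" "(\<Sum>i<m'. 2 * \<alpha> m' * \<beta> i * \<Lambda> m' i)"] by (simp add: mult.assoc)
  also have "\<dots> = (v powi (\<Sum>i<m'. 2 * \<alpha> m' * \<beta> i * \<Lambda> m' i) * v powi (cc m' \<Lambda> \<alpha> \<beta>)) * (Pm m' X (\<lambda>i. \<alpha> i + \<beta> i) * X m' powi (\<alpha> m' + \<beta> m'))"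
    by (simp add: IH xx mult.assoc)
  also have "\<dots> = v powi (cc (Suc m') \<Lambda> \<alpha> \<beta>) * Pm (Suc m') X (\<lambda>i. \<alpha> i + \<beta> i)"
    by (simp add: vp_add Pm_Suc cc_def algebra_simps)
  finally show ?case .
qed

lemma Xmon_mult: "Xmon v m \<Lambda> X \<alpha> * Xmon v m \<Lambda> X \<beta> = v powi (bil m \<Lambda> \<alpha> \<beta>) * Xmon v m \<Lambda> X (\<lambda>i. \<alpha> i + \<beta> i)"
proof -
  have "Xmon v m \<Lambda> X \<alpha> * Xmon v m \<Lambda> X \<beta> = (v powi ee m \<Lambda> \<alpha> * v powi ee m \<Lambda> \<beta>) * (Pm m X \<alpha> * Pm m X \<beta>)"
    using central_lcomm[OF vpc, of "Pm m X \<alpha>" "ee m \<Lambda> \<beta>"] by (simp add: Xmon_eq mult.assoc)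
  also have "\<dots> = v powi (ee m \<Lambda> \<alpha> + ee m \<Lambda> \<beta> + cc m \<Lambda> \<alpha> \<beta>) * Pm m X (\<lambda>i. \<alpha> i + \<beta> i)"
    by (simp add: Pm_mult vp_add mult.assoc[symmetric])
  also have "\<dots> = v powi (bil m \<Lambda> \<alpha> \<beta>) * Xmon v m \<Lambda> X (\<lambda>i. \<alpha> i + \<beta> i)"
  proof -
    have "ee m \<Lambda> \<alpha> + ee m \<Lambda> \<beta> + cc m \<Lambda> \<alpha> \<beta> = bil m \<Lambda> \<alpha> \<beta> + ee m \<Lambda> (\<lambda>i. \<alpha> i + \<beta> i)"
      using arith_bil[OF skew, of \<alpha> \<beta>] by linarith
    thus ?thesis by (simp add: Xmon_eq vp_add mult.assoc[symmetric])
  qed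
  finally show ?thesis .
qed

end


definition rhom :: "('b::division_ring \<Rightarrow> 'a::division_ring) \<Rightarrow> bool" where
  "rhom f \<longleftrightarrow> (\<forall>x y. f (x + y) = f x + f y) \<and> (\<forall>x y. f (x * y) = f x * f y) \<and> f 1 = 1"

lemma alg_hom_rhom: "alg_hom w v f \<Longrightarrow> rhom f"
  by (simp add: alg_hom_def rhom_def)
lemma alg_iso_rhom: "alg_iso w v f \<Longrightarrow> rhom f"
  unfolding alg_iso_def using alg_hom_rhom by blast

context
  fixes f :: "'b::division_ring \<Rightarrow> 'a::division_ring"
  assumes rh: "rhom f"
begin

lemma rh_add: "f (x + y) = f x + f y" using rh by (simp add: rhom_def)
lemma rh_mult: "f (x * y) = f x * f y" using rh by (simp add: rhom_def)
lemma rh_1: "f 1 = 1" using rh by (simp add: rhom_def)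
lemma rh_0: "f 0 = 0"
  using rh_add[of 0 0] by simp
lemma rh_uminus: "f (- x) = - f x"
proof -
  have "f x + f (- x) = 0" using rh_add[of x "-x"] rh_0 by simp
  thus ?thesis by (metis add.commute eq_neg_iff_add_eq_0)
qed
lemma rh_diff: "f (x - y) = f x - f y"
  using rh_add[of x "-y"] rh_uminus[of y] by simp
lemma rh_nz: "x \<noteq> 0 \<Longrightarrow> f x \<noteq> 0"
  using rh_mult[of x "inverse x"] rh_1 by auto
lemma rh_inverse: "f (inverse x) = inverse (f x)"
proof (cases "x = 0")
  case True thus ?thesis by (simp add: rh_0)
next
  case False
  have "f x * f (inverse x) = 1" using False rh_mult[of x "inverse x"] rh_1 by simp
  thus ?thesis using rh_nz[OF False] by (metis inverse_unique)
qed
lemma rh_inj: "inj f"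
proof (rule injI)
  fix x y assume "f x = f y"
  hence "f (x - y) = 0" by (simp add: rh_diff)
  thus "x = y" using rh_nz[of "x - y"] by auto
qed
lemma rh_of_nat: "f (of_nat n) = of_nat n"
  by (induction n) (simp_all add: rh_0 rh_add rh_1)
lemma rh_of_int: "f (of_int k) = of_int k"
  by (cases k rule: int_cases4) (simp_all add: rh_of_nat rh_uminus)
lemma rh_power: "f (x ^ n) = f x ^ n"
  by (induction n) (simp_all add: rh_1 rh_mult)
lemma rh_powi: "f (x powi j) = f x powi j"
  by (simp add: power_int_def rh_power rh_inverse)
lemma rh_sum: "f (sum g S) = (\<Sum>x\<in>S. f (g x))"
  by (induction S rule: infinite_finite_induct) (simp_all add: rh_0 rh_add)
lemma rh_prod_list: "f (prod_list xs) = prod_list (map f xs)"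
  by (induction xs) (simp_all add: rh_1 rh_mult)

end

lemma rhom_comp: "rhom f \<Longrightarrow> rhom g \<Longrightarrow> rhom (f \<circ> g)"
  by (simp add: rhom_def)

lemma qf_gen:
  assumes q: "qtorus_frac v m \<Lambda> X" and "0 \<in> A" "1 \<in> A" "\<forall>x\<in>A. \<forall>y\<in>A. x + y \<in> A \<and> x * y \<in> A"
    "\<forall>x\<in>A. - x \<in> A \<and> inverse x \<in> A" "v \<in> A" "\<forall>i<m. X i \<in> A"
  shows "A = UNIV"
proof -
  have H: "\<forall>A. 0 \<in> A \<longrightarrow> 1 \<in> A \<longrightarrow> (\<forall>x\<in>A. \<forall>y\<in>A. x + y \<in> A \<and> x * y \<in> A) \<longrightarrow>
          (\<forall>x\<in>A. - x \<in> A \<and> inverse x \<in> A) \<longrightarrow> v \<in> A \<longrightarrow> (\<forall>i<m. X i \<in> A) \<longrightarrow> A = UNIV"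
    using q[unfolded qtorus_frac_def, THEN conjunct2, THEN conjunct2, THEN conjunct2, THEN conjunct2, THEN conjunct2] .
  show ?thesis by (rule H[rule_format]) (use assms in auto)
qed

lemma gen_eq:
  assumes q: "qtorus_frac v m \<Lambda> X" and r1: "rhom g1" and r2: "rhom g2"
    and ev: "g1 v = g2 v" and eX: "\<forall>i<m. g1 (X i) = g2 (X i)"
  shows "g1 = g2"
proof -
  let ?A = "{x. g1 x = g2 x}"
  have "?A = UNIV"
  proof (rule qf_gen[OF q])
    show "0 \<in> ?A" "1 \<in> ?A" using r1 r2 by (simp_all add: rh_0 rh_1)
    show "v \<in> ?A" "\<forall>i<m. X i \<in> ?A" using ev eX by auto
    show "\<forall>x\<in>?A. \<forall>y\<in>?A. x + y \<in> ?A \<and> x * y \<in> ?A"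
      using r1 r2 by (simp add: rh_add rh_mult)
    show "\<forall>x\<in>?A. - x \<in> ?A \<and> inverse x \<in> ?A"
      using r1 r2 by (simp add: rh_uminus rh_inverse)
  qed
  thus ?thesis by auto
qed

lemma gen_surj:
  assumes q: "qtorus_frac v m \<Lambda> X" and r: "rhom g"
    and ev: "v \<in> range g" and eX: "\<forall>i<m. X i \<in> range g"
  shows "surj g"
proof -
  have "range g = UNIV"
proof (rule qf_gen[OF q])
  show "0 \<in> range g" using rh_0[OF r] by (metis rangeI)
  show "1 \<in> range g" using rh_1[OF r] by (metis rangeI)
  show "\<forall>x\<in>range g. \<forall>y\<in>range g. x + y \<in> range g \<and> x * y \<in> range g"
  proof (intro ballI conjI)
    fix x y assume "x \<in> range g" "y \<in> range g"
    then obtain a b where ab: "x = g a" "y = g b" by auto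
    show "x + y \<in> range g" using ab rh_add[OF r, of a b] by (simp add: image_iff) (metis)
    show "x * y \<in> range g" using ab rh_mult[OF r, of a b] by (simp add: image_iff) (metis)
  qed
  show "\<forall>x\<in>range g. - x \<in> range g \<and> inverse x \<in> range g"
  proof (intro ballI conjI)
    fix x assume "x \<in> range g"
    then obtain a where ab: "x = g a" by auto
    show "- x \<in> range g" using ab rh_uminus[OF r, of a] by (simp add: image_iff) (metis)
    show "inverse x \<in> range g" using ab rh_inverse[OF r, of a] by (simp add: image_iff) (metis)
  qed
qed (use ev eX in auto)
  thus ?thesis .
qed

context qt begin

lemma Pm_unitvec: "Pm m' X (unitvec i) = (if i < m' then X i else 1)"
  by (induction m') (auto simp: Pm_Suc unitvec_def less_Suc_eq)

lemma ee_unitvec: "ee m' \<Lambda> (unitvec i) = 0"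
  unfolding ee_def by (rule sum.neutral, auto intro!: sum.neutral simp: unitvec_def)

lemma Xmon_unitvec: "i < m \<Longrightarrow> Xmon v m \<Lambda> X (unitvec i) = X i"
  by (simp add: Xmon_eq Pm_unitvec ee_unitvec)

lemma Pm_zero: "Pm m' X (\<lambda>_. 0) = 1"
  by (induction m') (auto simp: Pm_Suc)

lemma Xmon_zero: "Xmon v m \<Lambda> X (\<lambda>_. 0) = 1"
  by (simp add: Xmon_eq Pm_zero ee_def)

lemma Pm_nz: "m' \<le> m \<Longrightarrow> Pm m' X \<alpha> \<noteq> 0"
  by (induction m') (auto simp: Pm_Suc X0)

lemma Xmon_nz: "Xmon v m \<Lambda> X \<alpha> \<noteq> 0"
  using Pm_nz[of m] v0 by (simp add: Xmon_eq)

lemma bil_swap: "bil m \<Lambda> \<beta> \<alpha> = - bil m \<Lambda> \<alpha> \<beta>"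
proof -
  have "bil m \<Lambda> \<beta> \<alpha> = (\<Sum>i<m. \<Sum>j<m. \<beta> i * \<Lambda> i j * \<alpha> j)" by (simp add: bil_def)
  also have "\<dots> = (\<Sum>j<m. \<Sum>i<m. \<beta> i * \<Lambda> i j * \<alpha> j)" by (rule sum.swap)
  also have "\<dots> = (\<Sum>j<m. \<Sum>i<m. - (\<alpha> j * \<Lambda> j i * \<beta> i))"
  proof (intro sum.cong refl)
    fix i j assume "i \<in> {..<m}" "j \<in> {..<m}"
    hence "\<Lambda> i j = - \<Lambda> j i" using skew by blast
    thus "\<beta> i * \<Lambda> i j * \<alpha> j = - (\<alpha> j * \<Lambda> j i * \<beta> i)" by simp
  qed
  also have "\<dots> = - bil m \<Lambda> \<alpha> \<beta>" by (simp add: bil_def sum_negf)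
  finally show ?thesis .
qed

lemma bil_self: "bil m \<Lambda> \<alpha> \<alpha> = 0"
  using bil_swap[of \<alpha> \<alpha>] by simp

lemma bil_scale_left: "bil m \<Lambda> (\<lambda>i. c * \<alpha> i) \<beta> = c * bil m \<Lambda> \<alpha> \<beta>"
  by (simp add: bil_def sum_distrib_left algebra_simps)
lemma bil_scale_right: "bil m \<Lambda> \<alpha> (\<lambda>i. c * \<beta> i) = c * bil m \<Lambda> \<alpha> \<beta>"
  by (simp add: bil_def sum_distrib_left algebra_simps)
lemma bil_add_left: "bil m \<Lambda> (\<lambda>i. \<alpha> i + \<gamma> i) \<beta> = bil m \<Lambda> \<alpha> \<beta> + bil m \<Lambda> \<gamma> \<beta>"
  by (simp add: bil_def sum.distrib algebra_simps)
lemma bil_add_right: "bil m \<Lambda> \<alpha> (\<lambda>i. \<beta> i + \<gamma> i) = bil m \<Lambda> \<alpha> \<beta> + bil m \<Lambda> \<alpha> \<gamma>"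
  by (simp add: bil_def sum.distrib algebra_simps)

lemma Xmon_power: "Xmon v m \<Lambda> X \<alpha> ^ s = Xmon v m \<Lambda> X (\<lambda>i. int s * \<alpha> i)"
proof (induction s)
  case 0 thus ?case using Xmon_zero by simp
next
  case (Suc s)
  have "Xmon v m \<Lambda> X \<alpha> ^ Suc s = Xmon v m \<Lambda> X (\<lambda>i. int s * \<alpha> i) * Xmon v m \<Lambda> X \<alpha>"
    by (simp only: power_Suc2 Suc)
  also have "\<dots> = Xmon v m \<Lambda> X (\<lambda>i. int (Suc s) * \<alpha> i)"
    by (simp add: Xmon_mult bil_scale_left bil_self algebra_simps)
  finally show ?case .
qed

lemma Xmon_central_comm: "central c \<Longrightarrow> c * Xmon v m \<Lambda> X \<alpha> = Xmon v m \<Lambda> X \<alpha> * c"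
  by (rule centralD)

end


lemma sum_atMost_rev: "(\<Sum>t\<le>(r::nat). g (r - t)) = (\<Sum>s\<le>r. g s)"
  by (rule sum.reindex_bij_witness[where i="\<lambda>t. r - t" and j="\<lambda>t. r - t"]) auto

lemma central_power_mult: "central c \<Longrightarrow> (c * y) ^ s = c ^ s * y ^ s"
proof (induction s)
  case (Suc s)
  have "(c * y) ^ Suc s = (c ^ s * y ^ s) * (c * y)" by (simp only: power_Suc2 Suc)
  also have "\<dots> = (c ^ s * c) * (y ^ s * y)"
    using central_lcomm[OF Suc.prems, of "y^s" y] by (simp add: mult.assoc)
  finally show ?case by (simp only: power_Suc2)
qed simp

context qt begin

lemma Xmon_P:
  assumes "\<And>s. central (L s)"
  shows "Xmon v m \<Lambda> X \<beta> * (\<Sum>s\<le>R. L s * (v powi e * Xmon v m \<Lambda> X g) ^ s)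
       = (\<Sum>s\<le>R. L s * (v powi (e * int s + int s * bil m \<Lambda> \<beta> g) * Xmon v m \<Lambda> X (\<lambda>i. \<beta> i + int s * g i)))"
  unfolding sum_distrib_left
proof (rule sum.cong[OF refl])
  fix s assume "s \<in> {..R}"
  have "Xmon v m \<Lambda> X \<beta> * (L s * (v powi e * Xmon v m \<Lambda> X g) ^ s)
      = L s * (Xmon v m \<Lambda> X \<beta> * ((v powi e) ^ s * Xmon v m \<Lambda> X g ^ s))"
    using central_lcomm[OF assms] central_power_mult[OF vpc] by simp
  also have "\<dots> = L s * ((v powi e) ^ s * (Xmon v m \<Lambda> X \<beta> * Xmon v m \<Lambda> X (\<lambda>i. int s * g i)))"
    using central_lcomm[OF central_power[OF vpc]] by (simp add: Xmon_power)
  also have "\<dots> = L s * (v powi (e * int s + int s * bil m \<Lambda> \<beta> g) * Xmon v m \<Lambda> X (\<lambda>i. \<beta> i + int s * g i))"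
    by (simp add: Xmon_mult bil_scale_right power_int_power' vp_add mult.assoc[symmetric])
  finally show "Xmon v m \<Lambda> X \<beta> * (L s * (v powi e * Xmon v m \<Lambda> X g) ^ s)
      = L s * (v powi (e * int s + int s * bil m \<Lambda> \<beta> g) * Xmon v m \<Lambda> X (\<lambda>i. \<beta> i + int s * g i))" .
qed

end

locale main =
  fixes m n k :: nat and \<epsilon> :: int
    and r :: "nat \<Rightarrow> nat" and h :: "nat \<Rightarrow> nat \<Rightarrow> int \<Rightarrow> int"
    and B \<Lambda> \<Lambda>' :: "nat \<Rightarrow> nat \<Rightarrow> int" and \<delta> :: "nat \<Rightarrow> int"
    and va :: "'a::division_ring" and X :: "nat \<Rightarrow> 'a"
    and vb :: "'b::division_ring" and X' :: "nat \<Rightarrow> 'b"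
    and \<mu> :: "'b \<Rightarrow> 'a"
  assumes a1: "1 \<le> n" and a2: "n \<le> m" and a3: "k < n"
    and a4: "\<epsilon> = 1 \<or> \<epsilon> = -1"
    and a5: "mutation_data n r h"
    and a6: "compatible_pair m n B \<Lambda> \<delta>"
    and a7: "qtorus_frac va m \<Lambda> X"
    and a8: "\<forall>i<m. \<forall>j<m. \<Lambda>' i j = matmul m (transp (Emat B r k 1)) (matmul m \<Lambda> (Emat B r k 1)) i j"
    and a9: "qtorus_frac vb m \<Lambda>' X'"
    and a10: "alg_iso vb va \<mu>"
    and a11: "\<forall>i<m. i \<noteq> k \<longrightarrow> \<mu> (Xmon vb m \<Lambda>' X' (unitvec i)) = Xmon va m \<Lambda> X (unitvec i)"
    and a12: "\<mu> (Xmon vb m \<Lambda>' X' (unitvec k)) =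
           (\<Sum>s\<le>r k. lev va (h k s) *
              Xmon va m \<Lambda> X (\<lambda>j. int s * pospart (col m B k) j
                                 + int (r k - s) * pospart (\<lambda>i. - col m B k i) j - unitvec k j))"
begin

lemma km: "k < m" using a2 a3 by simp

lemma skewA: "\<forall>i<m. \<forall>j<m. \<Lambda> i j = - \<Lambda> j i" using a6 unfolding compatible_pair_def by blast
lemma dpos: "\<delta> k > 0" using a6 a3 unfolding compatible_pair_def by blast
lemma compat: "j < m \<Longrightarrow> (\<Sum>i<m. B i k * \<Lambda> i j) = (if j = k then \<delta> k else 0)"
  using a6 a3 unfolding compatible_pair_def by blast

sublocale A: qt va m \<Lambda> X
  using a7 skewA by unfold_locales

definition E :: "int \<Rightarrow> nat \<Rightarrow> nat \<Rightarrow> int" where "E e = Emat B r k e"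
definition b :: "nat \<Rightarrow> int" where "b = col m B k"

lemma Lam_b: "i < m \<Longrightarrow> (\<Sum>j<m. \<Lambda> i j * b j) = - (if i = k then \<delta> k else 0)"
proof -
  assume im: "i < m"
  have "(\<Sum>j<m. \<Lambda> i j * b j) = (\<Sum>j<m. - (B j k * \<Lambda> j i))"
  proof (rule sum.cong[OF refl])
    fix j assume "j \<in> {..<m}"
    hence "\<Lambda> i j = - \<Lambda> j i" using skewA im by blast
    thus "\<Lambda> i j * b j = - (B j k * \<Lambda> j i)" using \<open>j \<in> {..<m}\<close> by (simp add: b_def col_def)
  qed
  also have "\<dots> = - (if i = k then \<delta> k else 0)" using compat[OF im] by (simp add: sum_negf)
  finally show ?thesis .
qed

lemma bil_b: "bil m \<Lambda> \<beta> b = - \<beta> k * \<delta> k"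
proof -
  have "bil m \<Lambda> \<beta> b = (\<Sum>i<m. \<beta> i * (\<Sum>j<m. \<Lambda> i j * b j))"
    by (simp add: bil_def sum_distrib_left mult.assoc)
  also have "\<dots> = (\<Sum>i<m. - (if i = k then \<beta> k * \<delta> k else 0))"
    by (rule sum.cong[OF refl]) (simp add: Lam_b)
  also have "\<dots> = - \<beta> k * \<delta> k" using km by (simp add: sum_negf)
  finally show ?thesis .
qed

lemma Bkk: "B k k = 0"
proof -
  have "bil m \<Lambda> b b = 0" by (rule A.bil_self)
  hence "b k * \<delta> k = 0" using bil_b[of b] by simp
  thus ?thesis using dpos km by (simp add: b_def col_def)
qed

lemma mulv_E: "mulv m (E e) \<alpha> j = (if j < m then (if j = k then - \<alpha> k else \<alpha> j + max (- e * B j k * int (r k)) 0 * \<alpha> k) else 0)"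
proof (cases "j < m")
  case True
  have "(\<Sum>l<m. E e j l * \<alpha> l) = E e j k * \<alpha> k + (\<Sum>l\<in>{..<m} - {k}. E e j l * \<alpha> l)"
    using km by (simp add: sum.remove)
  also have "(\<Sum>l\<in>{..<m} - {k}. E e j l * \<alpha> l) = (\<Sum>l\<in>{..<m} - {k}. if l = j then \<alpha> l else 0)"
    by (rule sum.cong) (auto simp: E_def Emat_def)
  also have "\<dots> = (if j \<noteq> k then \<alpha> j else 0)" using True by (simp add: sum.delta')
  finally show ?thesis using True by (auto simp: mulv_def E_def Emat_def)
qed (simp add: mulv_def)


lemma Lam'_eq: "i < m \<Longrightarrow> j < m \<Longrightarrow> \<Lambda>' i j = (\<Sum>l<m. \<Sum>p<m. E 1 l i * \<Lambda> l p * E 1 p j)"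
  using a8 by (simp add: matmul_def transp_def E_def sum_distrib_left mult.assoc)

lemma bilE: "bil m \<Lambda>' \<alpha> \<beta> = bil m \<Lambda> (mulv m (E 1) \<alpha>) (mulv m (E 1) \<beta>)"
proof -
  define F where "F i j l p = \<alpha> i * E 1 l i * \<Lambda> l p * E 1 p j * \<beta> j" for i j l p
  have "bil m \<Lambda>' \<alpha> \<beta> = (\<Sum>i<m. \<Sum>j<m. \<Sum>l<m. \<Sum>p<m. F i j l p)"
    unfolding bil_def F_def
    by (intro sum.cong refl) (simp add: Lam'_eq sum_distrib_left sum_distrib_right mult.assoc)
  also have "\<dots> = (\<Sum>i<m. \<Sum>l<m. \<Sum>j<m. \<Sum>p<m. F i j l p)"
    by (rule sum.cong[OF refl], rule sum.swap)
  also have "\<dots> = (\<Sum>i<m. \<Sum>l<m. \<Sum>p<m. \<Sum>j<m. F i j l p)"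
    by (rule sum.cong[OF refl], rule sum.cong[OF refl], rule sum.swap)
  also have "\<dots> = (\<Sum>l<m. \<Sum>i<m. \<Sum>p<m. \<Sum>j<m. F i j l p)"
    by (rule sum.swap)
  also have "\<dots> = (\<Sum>l<m. \<Sum>p<m. \<Sum>i<m. \<Sum>j<m. F i j l p)"
    by (rule sum.cong[OF refl], rule sum.swap)
  also have "\<dots> = bil m \<Lambda> (mulv m (E 1) \<alpha>) (mulv m (E 1) \<beta>)"
    unfolding bil_def F_def mulv_def
    by (intro sum.cong refl) (simp add: sum_distrib_left sum_distrib_right algebra_simps)
  finally show ?thesis .
qed

lemma bil_unit: "i < m \<Longrightarrow> j < m \<Longrightarrow> bil m L (unitvec i) (unitvec j) = L i j"
proof -
  assume ij: "i < m" "j < m"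
  have e: "(\<Sum>c<m. unitvec i a * L a c * unitvec j c) = (if a = i then L a j else 0)" for a
  proof (cases "a = i")
    case True
    have "(\<Sum>c<m. unitvec i a * L a c * unitvec j c) = (\<Sum>c<m. if c = j then L a c else 0)"
      using True by (intro sum.cong refl) (simp add: unitvec_def)
    thus ?thesis using True ij by simp
  qed (simp add: unitvec_def)
  show ?thesis unfolding bil_def e using ij by simp
qed

lemma skewB: "\<forall>i<m. \<forall>j<m. \<Lambda>' i j = - \<Lambda>' j i"
proof (intro allI impI)
  fix i j assume ij: "i < m" "j < m"
  have "\<Lambda>' i j = bil m \<Lambda>' (unitvec i) (unitvec j)" using ij by (simp add: bil_unit)
  also have "\<dots> = - bil m \<Lambda>' (unitvec j) (unitvec i)"
    unfolding bilE by (rule A.bil_swap)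
  also have "\<dots> = - \<Lambda>' j i" using ij by (simp add: bil_unit)
  finally show "\<Lambda>' i j = - \<Lambda>' j i" .
qed

sublocale Bq: qt vb m \<Lambda>' X'
  using a9 skewB by unfold_locales

lemma b_out: "j \<ge> m \<Longrightarrow> b j = 0" by (simp add: b_def col_def)
lemma b_in: "j < m \<Longrightarrow> b j = B j k" by (simp add: b_def col_def)

lemma Eminus_eq: "mulv m (E (-1)) \<alpha> = (\<lambda>j. mulv m (E 1) \<alpha> j + (\<alpha> k * int (r k)) * b j)"
proof
  fix j
  show "mulv m (E (-1)) \<alpha> j = mulv m (E 1) \<alpha> j + (\<alpha> k * int (r k)) * b j"
  proof (cases "j < m")
    case True
    thus ?thesis
      by (cases "j = k") (auto simp: mulv_E b_in Bkk max_def algebra_simps)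
  qed (simp add: mulv_E b_out)
qed

lemma bil_Eminus: "bil m \<Lambda> (mulv m (E (-1)) \<alpha>) (mulv m (E (-1)) \<beta>) = bil m \<Lambda> (mulv m (E 1) \<alpha>) (mulv m (E 1) \<beta>)"
proof -
  let ?x = "mulv m (E 1) \<alpha>" and ?y = "mulv m (E 1) \<beta>"
  let ?a = "\<alpha> k * int (r k)" and ?c = "\<beta> k * int (r k)"
  have xk: "?x k = - \<alpha> k" and yk: "?y k = - \<beta> k" using km by (simp_all add: mulv_E)
  have "bil m \<Lambda> (mulv m (E (-1)) \<alpha>) (mulv m (E (-1)) \<beta>)
     = bil m \<Lambda> ?x ?y + ?c * bil m \<Lambda> ?x b + ?a * bil m \<Lambda> b ?y + ?a * ?c * bil m \<Lambda> b b"
    unfolding Eminus_eq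
    by (simp add: A.bil_add_left A.bil_add_right A.bil_scale_left A.bil_scale_right algebra_simps)
  also have "\<dots> = bil m \<Lambda> ?x ?y"
    using A.bil_swap[of b ?y] A.bil_self[of b] bil_b[of ?x] bil_b[of ?y] xk yk
    by (simp add: algebra_simps)
  finally show ?thesis .
qed

lemma bilE_any: "\<epsilon>' = 1 \<or> \<epsilon>' = -1 \<Longrightarrow> bil m \<Lambda>' \<alpha> \<beta> = bil m \<Lambda> (mulv m (E \<epsilon>') \<alpha>) (mulv m (E \<epsilon>') \<beta>)"
  using bilE bil_Eminus by auto

lemma E_unit: "i < m \<Longrightarrow> i \<noteq> k \<Longrightarrow> mulv m (E e) (unitvec i) = unitvec i"
  by (rule ext) (auto simp: mulv_E unitvec_def)

lemma E_unitk: "mulv m (E e) (unitvec k) = (\<lambda>j. if j < m then (if j = k then -1 else max (- e * B j k * int (r k)) 0) else 0)"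
  by (rule ext) (auto simp: mulv_E unitvec_def)

end


lemma hpow_0: "hpow v R hk d z 0 = 1" by (simp add: hpow_def)
lemma hpow_1: "hpow v R hk d z 1 = (\<Sum>s\<le>R. lev v (hk s) * (v powi d * z) ^ s)"
  by (simp add: hpow_def upto.simps)
lemma hpow_m1: "hpow v R hk d z (-1) = inverse (\<Sum>s\<le>R. lev v (hk s) * (v powi (- d) * z) ^ s)"
  by (simp add: hpow_def upto.simps)

context main begin

lemma lev_central: "central (lev va c)"
  unfolding lev_def using A.vc by (intro central_sum) simp

lemma rh_lev: "rhom f \<Longrightarrow> f va = va \<Longrightarrow> f (lev va c) = lev va c"
  unfolding lev_def by (simp add: rh_sum rh_mult rh_of_int rh_powi)

lemma palin: "s \<le> r k \<Longrightarrow> h k s = h k (r k - s)"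
  using a5 a3 unfolding mutation_data_def by blast

definition \<gamma> :: "nat \<Rightarrow> nat \<Rightarrow> int" where
  "\<gamma> s = (\<lambda>j. int s * pospart (col m B k) j + int (r k - s) * pospart (\<lambda>i. - col m B k i) j - unitvec k j)"

lemma mu_k: "\<mu> (X' k) = (\<Sum>s\<le>r k. lev va (h k s) * Xmon va m \<Lambda> X (\<gamma> s))"
  using a12 Bq.Xmon_unitvec[OF km] by (simp add: \<gamma>_def)

lemma gamma_k: "\<gamma> s k = -1"
  using Bkk km by (simp add: \<gamma>_def pospart_def col_def unitvec_def)

lemma beta1_gamma: "s \<le> r k \<Longrightarrow> (\<lambda>i. mulv m (E 1) (unitvec k) i + int s * (1 * col m B k i)) = \<gamma> s"
  unfolding E_unitk by (rule ext) (auto simp: E_unitk \<gamma>_def pospart_def col_def unitvec_def Bkk km max_def algebra_simps of_nat_diff zero_le_mult_iff mult_le_0_iff)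

lemma betam_gamma: "t \<le> r k \<Longrightarrow> (\<lambda>i. mulv m (E (-1)) (unitvec k) i + int t * (-1 * col m B k i)) = \<gamma> (r k - t)"
  unfolding E_unitk by (rule ext) (auto simp: E_unitk \<gamma>_def pospart_def col_def unitvec_def Bkk km max_def algebra_simps of_nat_diff zero_le_mult_iff mult_le_0_iff)

lemma bil_col: "bil m \<Lambda> \<beta> (\<lambda>i. e * col m B k i) = e * (- \<beta> k * \<delta> k)"
  using A.bil_scale_right[of \<beta> e "col m B k"] bil_b[of \<beta>] by (simp add: b_def)

lemma unit_Zm: "i < m \<Longrightarrow> unitvec i \<in> Zm m"
  by (simp add: Zm_def unitvec_def)

lemma mu_v: "\<mu> vb = va" using a10 by (simp add: alg_iso_def alg_hom_def)

lemma second: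
  assumes ph: "alg_iso vb va \<phi>"
    and phX: "\<forall>\<alpha>\<in>Zm m. \<phi> (Xmon vb m \<Lambda>' X' \<alpha>) = Xmon va m \<Lambda> X (mulv m (Emat B r k \<epsilon>) \<alpha>)"
    and ps: "is_psi va m \<Lambda> X B \<delta> r h k \<epsilon> \<psi>"
  shows "\<mu> = (if \<epsilon> = 1 then \<psi> else inv \<psi>) \<circ> \<phi>"
proof -
  have psi_iso: "alg_iso va va \<psi>" using ps by (simp add: is_psi_def)
  have rps: "rhom \<psi>" using alg_iso_rhom[OF psi_iso] .
  have rph: "rhom \<phi>" using alg_iso_rhom[OF ph] .
  have rmu: "rhom \<mu>" using alg_iso_rhom[OF a10] .
  have psv: "\<psi> va = va" using psi_iso by (simp add: alg_iso_def alg_hom_def)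
  have phv: "\<phi> vb = va" using ph by (simp add: alg_iso_def alg_hom_def)
  have psX: "\<And>\<beta>. \<beta> \<in> Zm m \<Longrightarrow> \<psi> (Xmon va m \<Lambda> X \<beta>) = Xmon va m \<Lambda> X \<beta> *
        inverse (hpow va (r k) (h k) (\<delta> k) (Xmon va m \<Lambda> X (\<lambda>i. \<epsilon> * col m B k i)) (\<epsilon> * \<beta> k))"
    using ps by (simp add: is_psi_def)
  have phXi: "\<And>i. i < m \<Longrightarrow> \<phi> (X' i) = Xmon va m \<Lambda> X (mulv m (E \<epsilon>) (unitvec i))"
  proof -
    fix i assume im: "i < m"
    have "\<phi> (Xmon vb m \<Lambda>' X' (unitvec i)) = Xmon va m \<Lambda> X (mulv m (Emat B r k \<epsilon>) (unitvec i))"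
      using phX unit_Zm[OF im] by blast
    thus "\<phi> (X' i) = Xmon va m \<Lambda> X (mulv m (E \<epsilon>) (unitvec i))"
      using Bq.Xmon_unitvec[OF im] by (simp add: E_def)
  qed
  have E_Zm: "\<And>e \<alpha>. mulv m (E e) \<alpha> \<in> Zm m" by (simp add: Zm_def mulv_def)
  have gZm: "\<And>s. \<gamma> s \<in> Zm m" using km by (simp add: Zm_def \<gamma>_def pospart_def col_def unitvec_def not_le)
  have psi_unit: "\<And>i. i < m \<Longrightarrow> i \<noteq> k \<Longrightarrow> \<psi> (Xmon va m \<Lambda> X (unitvec i)) = Xmon va m \<Lambda> X (unitvec i)"
    using psX unit_Zm by (simp add: unitvec_def hpow_0)
  show ?thesis
  proof (cases "\<epsilon> = 1")
    case True
    have eq: "\<mu> = \<psi> \<circ> \<phi>"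
    proof (rule gen_eq[OF a9 rmu rhom_comp[OF rps rph]])
      show "\<mu> vb = (\<psi> \<circ> \<phi>) vb" using mu_v phv psv by simp
      show "\<forall>i<m. \<mu> (X' i) = (\<psi> \<circ> \<phi>) (X' i)"
      proof (intro allI impI)
        fix i assume im: "i < m"
        show "\<mu> (X' i) = (\<psi> \<circ> \<phi>) (X' i)"
        proof (cases "i = k")
          case False
          thus ?thesis using a11[rule_format, OF im False] Bq.Xmon_unitvec[OF im] phXi[OF im] E_unit[OF im False] psi_unit[OF im False]
            by simp
        next
          case ik: True
          let ?b1 = "mulv m (E 1) (unitvec k)"
          have b1k: "?b1 k = -1" using km by (simp add: mulv_E unitvec_def)
          have "(\<psi> \<circ> \<phi>) (X' k) = \<psi> (Xmon va m \<Lambda> X ?b1)" using phXi[OF km] True by simp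
          also have "\<dots> = Xmon va m \<Lambda> X ?b1 * (\<Sum>s\<le>r k. lev va (h k s) * (va powi (- \<delta> k) * Xmon va m \<Lambda> X (\<lambda>i. 1 * col m B k i)) ^ s)"
            using psX[OF E_Zm] True b1k by (simp add: hpow_m1)
          also have "\<dots> = (\<Sum>s\<le>r k. lev va (h k s) * (va powi (- \<delta> k * int s + int s * bil m \<Lambda> ?b1 (\<lambda>i. 1 * col m B k i)) * Xmon va m \<Lambda> X (\<lambda>i. ?b1 i + int s * (1 * col m B k i))))"
            by (rule A.Xmon_P) (rule lev_central)
          also have "\<dots> = (\<Sum>s\<le>r k. lev va (h k s) * Xmon va m \<Lambda> X (\<gamma> s))"
          proof (rule sum.cong[OF refl])
            fix s assume "s \<in> {..r k}"
            hence sr: "s \<le> r k" by simp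
            have "bil m \<Lambda> ?b1 (\<lambda>i. 1 * col m B k i) = \<delta> k" using bil_col[of ?b1 1] b1k by simp
            hence ex: "- \<delta> k * int s + int s * bil m \<Lambda> ?b1 (\<lambda>i. 1 * col m B k i) = 0" by simp
            show "lev va (h k s) * (va powi (- \<delta> k * int s + int s * bil m \<Lambda> ?b1 (\<lambda>i. 1 * col m B k i)) * Xmon va m \<Lambda> X (\<lambda>i. ?b1 i + int s * (1 * col m B k i)))
               = lev va (h k s) * Xmon va m \<Lambda> X (\<gamma> s)"
              by (simp only: ex beta1_gamma[OF sr]) simp
          qed
          also have "\<dots> = \<mu> (X' k)" using mu_k by simp
          finally show ?thesis using ik by simp
        qed
      qed
    qed
    thus ?thesis using True by simp
  next
    case False
    hence em: "\<epsilon> = -1" using a4 by simp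
    have bij: "bij \<psi>" using psi_iso by (simp add: alg_iso_def)
    have eq: "\<psi> \<circ> \<mu> = \<phi>"
    proof (rule gen_eq[OF a9 rhom_comp[OF rps rmu] rph])
      show "(\<psi> \<circ> \<mu>) vb = \<phi> vb" using mu_v phv psv by simp
      show "\<forall>i<m. (\<psi> \<circ> \<mu>) (X' i) = \<phi> (X' i)"
      proof (intro allI impI)
        fix i assume im: "i < m"
        show "(\<psi> \<circ> \<mu>) (X' i) = \<phi> (X' i)"
        proof (cases "i = k")
          case False
          thus ?thesis using a11[rule_format, OF im False] Bq.Xmon_unitvec[OF im] phXi[OF im] E_unit[OF im False] psi_unit[OF im False]
            by simp
        next
          case ik: True
          let ?bm = "mulv m (E (-1)) (unitvec k)"
          let ?P = "\<Sum>s\<le>r k. lev va (h k s) * (va powi (\<delta> k) * Xmon va m \<Lambda> X (\<lambda>i. -1 * col m B k i)) ^ s"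
          have bmk: "?bm k = -1" using km by (simp add: mulv_E unitvec_def)
          have "\<psi> (\<mu> (X' k)) = (\<Sum>s\<le>r k. lev va (h k s) * (Xmon va m \<Lambda> X (\<gamma> s) * inverse ?P))"
            unfolding mu_k using rh_lev[OF rps psv] psX[OF gZm] em gamma_k
            by (simp add: rh_sum[OF rps] rh_mult[OF rps] hpow_1)
          also have "\<dots> = \<mu> (X' k) * inverse ?P"
            unfolding mu_k by (simp add: sum_distrib_right mult.assoc)
          finally have 1: "\<psi> (\<mu> (X' k)) = \<mu> (X' k) * inverse ?P" .
          have "Xmon va m \<Lambda> X ?bm * ?P = (\<Sum>s\<le>r k. lev va (h k s) * (va powi (\<delta> k * int s + int s * bil m \<Lambda> ?bm (\<lambda>i. -1 * col m B k i)) * Xmon va m \<Lambda> X (\<lambda>i. ?bm i + int s * (-1 * col m B k i))))"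
            by (rule A.Xmon_P) (rule lev_central)
          also have "\<dots> = (\<Sum>t\<le>r k. lev va (h k (r k - t)) * Xmon va m \<Lambda> X (\<gamma> (r k - t)))"
          proof (rule sum.cong[OF refl])
            fix s assume "s \<in> {..r k}"
            hence sr: "s \<le> r k" by simp
            have "bil m \<Lambda> ?bm (\<lambda>i. -1 * col m B k i) = - \<delta> k" using bil_col[of ?bm "-1"] bmk by simp
            hence ex: "\<delta> k * int s + int s * bil m \<Lambda> ?bm (\<lambda>i. -1 * col m B k i) = 0" by simp
            show "lev va (h k s) * (va powi (\<delta> k * int s + int s * bil m \<Lambda> ?bm (\<lambda>i. -1 * col m B k i)) * Xmon va m \<Lambda> X (\<lambda>i. ?bm i + int s * (-1 * col m B k i)))
               = lev va (h k (r k - s)) * Xmon va m \<Lambda> X (\<gamma> (r k - s))"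
              by (simp only: ex betam_gamma[OF sr] palin[OF sr, symmetric]) simp
          qed
          also have "\<dots> = \<mu> (X' k)" unfolding mu_k by (rule sum_atMost_rev)
          finally have 2: "Xmon va m \<Lambda> X ?bm * ?P = \<mu> (X' k)" .
          have "\<mu> (X' k) \<noteq> 0" using rh_nz[OF rmu] Bq.X0[OF km] by simp
          hence P0: "?P \<noteq> 0" using 2 by auto
          have "\<psi> (\<mu> (X' k)) = Xmon va m \<Lambda> X ?bm"
            using 1 2[symmetric] P0 by (simp add: mult.assoc)
          thus ?thesis using phXi[OF km] em ik by simp
        qed
      qed
    qed
    have "\<mu> = inv \<psi> \<circ> \<phi>"
    proof
      fix x
      have "inv \<psi> (\<phi> x) = inv \<psi> (\<psi> (\<mu> x))" using eq by (metis comp_apply)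
      also have "\<dots> = \<mu> x" using bij by (simp add: bij_is_inj)
      finally show "\<mu> x = (inv \<psi> \<circ> \<phi>) x" by simp
    qed
    thus ?thesis using False by simp
  qed
qed

end


lemma inv_cancel_left: "(x::'a::division_ring) \<noteq> 0 \<Longrightarrow> x * (inverse x * y) = y"
  by (simp add: mult.assoc[symmetric])

lemma frac_add:
  fixes a s a' s' c u :: "'a::division_ring"
  assumes "s' * u = s * c" "s \<noteq> 0" "c \<noteq> 0" "u \<noteq> 0" "s' \<noteq> 0"
  shows "a * inverse s + a' * inverse s' = (a * c + a' * u) * inverse (s * c)"
proof -
  have sc: "s * c \<noteq> 0" using assms by simp
  have 1: "inverse s = c * inverse (s * c)"
    using assms by (simp add: nonzero_inverse_mult_distrib mult.assoc[symmetric])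
  have 2: "inverse s' = u * inverse (s * c)"
    using assms by (simp add: nonzero_inverse_mult_distrib mult.assoc[symmetric] flip: assms(1))
  show ?thesis by (simp add: 1 2 distrib_right mult.assoc)
qed

lemma frac_mult:
  fixes a s a' s' c u :: "'a::division_ring"
  assumes "a' * u = s * c" "s \<noteq> 0" "u \<noteq> 0" "s' \<noteq> 0"
  shows "(a * inverse s) * (a' * inverse s') = (a * c) * inverse (s' * u)"
proof -
  have "inverse s * a' = c * inverse u"
  proof -
    have "inverse s * a' * u = inverse s * (s * c)" using assms(1) by (simp add: mult.assoc)
    also have "\<dots> = c" using assms(2) by (metis mult.assoc left_inverse mult_1_left)
    finally have 1: "inverse s * a' * u = c" .
    have "inverse s * a' = (inverse s * a' * u) * inverse u" using assms(3)
      by (metis mult.assoc right_inverse mult_1_right)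
    thus ?thesis using 1 by simp
  qed
  hence "(a * inverse s) * (a' * inverse s') = a * (c * inverse u) * inverse s'"
    by (metis mult.assoc)
  also have "\<dots> = (a * c) * inverse (s' * u)"
    using assms by (simp add: nonzero_inverse_mult_distrib mult.assoc)
  finally show ?thesis .
qed

locale ore_setup =
  fixes T :: "'b::division_ring set" and f :: "'b \<Rightarrow> 'a::division_ring"
  assumes T1: "1 \<in> T" and Tadd: "x \<in> T \<Longrightarrow> y \<in> T \<Longrightarrow> x + y \<in> T"
    and Tmult: "x \<in> T \<Longrightarrow> y \<in> T \<Longrightarrow> x * y \<in> T" and Tneg: "x \<in> T \<Longrightarrow> - x \<in> T"
    and ore: "a \<in> T \<Longrightarrow> s \<in> T \<Longrightarrow> s \<noteq> 0 \<Longrightarrow> \<exists>u c. u \<in> T \<and> c \<in> T \<and> u \<noteq> 0 \<and> a * u = s * c"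
    and fadd: "x \<in> T \<Longrightarrow> y \<in> T \<Longrightarrow> f (x + y) = f x + f y"
    and fmult: "x \<in> T \<Longrightarrow> y \<in> T \<Longrightarrow> f (x * y) = f x * f y"
    and f1: "f 1 = 1"
    and fnz: "x \<in> T \<Longrightarrow> x \<noteq> 0 \<Longrightarrow> f x \<noteq> 0"
begin

definition Fr :: "'b set" where
  "Fr = {a * inverse s | a s. a \<in> T \<and> s \<in> T \<and> s \<noteq> 0}"

lemma T0: "0 \<in> T" using Tadd[OF T1 Tneg[OF T1]] by simp

lemma ore2:
  assumes "s \<in> T" "s' \<in> T" "s \<noteq> 0" "s' \<noteq> 0"
  obtains u c where "u \<in> T" "c \<in> T" "u \<noteq> 0" "c \<noteq> 0" "s' * u = s * c"
proof -
  obtain u c where uc: "u \<in> T" "c \<in> T" "u \<noteq> 0" "s' * u = s * c" using ore[OF assms(2,1,3)] by blast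
  have "c \<noteq> 0" using uc assms by auto
  thus ?thesis using that uc by blast
qed

lemma Fr_add: "x \<in> Fr \<Longrightarrow> y \<in> Fr \<Longrightarrow> x + y \<in> Fr"
proof -
  assume "x \<in> Fr" "y \<in> Fr"
  then obtain a s a' s' where x: "x = a * inverse s" "a \<in> T" "s \<in> T" "s \<noteq> 0"
    and y: "y = a' * inverse s'" "a' \<in> T" "s' \<in> T" "s' \<noteq> 0" unfolding Fr_def by blast
  obtain u c where uc: "u \<in> T" "c \<in> T" "u \<noteq> 0" "c \<noteq> 0" "s' * u = s * c"
    using ore2[OF x(3) y(3) x(4) y(4)] by blast
  have "x + y = (a * c + a' * u) * inverse (s * c)"
    unfolding x(1) y(1) by (rule frac_add) (use uc x y in auto)
  moreover have "a * c + a' * u \<in> T" "s * c \<in> T" "s * c \<noteq> 0" using uc x y by (auto intro!: Tadd Tmult)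
  ultimately show "x + y \<in> Fr" unfolding Fr_def by blast
qed

lemma Fr_mult: "x \<in> Fr \<Longrightarrow> y \<in> Fr \<Longrightarrow> x * y \<in> Fr"
proof -
  assume "x \<in> Fr" "y \<in> Fr"
  then obtain a s a' s' where x: "x = a * inverse s" "a \<in> T" "s \<in> T" "s \<noteq> 0"
    and y: "y = a' * inverse s'" "a' \<in> T" "s' \<in> T" "s' \<noteq> 0" unfolding Fr_def by blast
  obtain u c where uc: "u \<in> T" "c \<in> T" "u \<noteq> 0" "a' * u = s * c"
    using ore[OF y(2) x(3) x(4)] by blast
  have "x * y = (a * c) * inverse (s' * u)"
    unfolding x(1) y(1) by (rule frac_mult) (use uc x y in auto)
  moreover have "a * c \<in> T" "s' * u \<in> T" "s' * u \<noteq> 0" using uc x y by (auto intro!: Tmult)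
  ultimately show "x * y \<in> Fr" unfolding Fr_def by blast
qed

lemma Fr_neg: "x \<in> Fr \<Longrightarrow> - x \<in> Fr"
proof -
  assume "x \<in> Fr"
  then obtain a s where x: "x = a * inverse s" "a \<in> T" "s \<in> T" "s \<noteq> 0" unfolding Fr_def by blast
  have "- x = (- a) * inverse s" using x by simp
  moreover have "- a \<in> T" using Tneg x by blast
  ultimately show "- x \<in> Fr" unfolding Fr_def using x by blast
qed

lemma Fr_inv: "x \<in> Fr \<Longrightarrow> inverse x \<in> Fr"
proof -
  assume "x \<in> Fr"
  then obtain a s where x: "x = a * inverse s" "a \<in> T" "s \<in> T" "s \<noteq> 0" unfolding Fr_def by blast
  show "inverse x \<in> Fr"
  proof (cases "a = 0")
    case True
    hence "inverse x = 0 * inverse 1" using x by simp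
    moreover have "(1::'b) \<noteq> 0" by simp
    ultimately show ?thesis unfolding Fr_def using T0 T1 by blast
  next
    case False
    hence "inverse x = s * inverse a" using x by (simp add: nonzero_inverse_mult_distrib)
    thus ?thesis unfolding Fr_def using x False by blast
  qed
qed

lemma T_Fr: "x \<in> T \<Longrightarrow> x \<in> Fr"
  unfolding Fr_def using T1 by force

lemma wd:
  assumes "a \<in> T" "s \<in> T" "s \<noteq> 0" "a' \<in> T" "s' \<in> T" "s' \<noteq> 0" "a * inverse s = a' * inverse s'"
  shows "f a * inverse (f s) = f a' * inverse (f s')"
proof -
  obtain u c where uc: "u \<in> T" "c \<in> T" "u \<noteq> 0" "c \<noteq> 0" "s' * u = s * c"
    using ore2[OF assms(2,5,3,6)] by blast
  have "a * c = a * inverse s * (s * c)" using assms(3) by (metis mult.assoc left_inverse mult_1_left)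
  also have "\<dots> = a' * inverse s' * (s' * u)" using assms uc by simp
  also have "\<dots> = a' * u" using assms(6) by (metis mult.assoc left_inverse mult_1_left)
  finally have ac: "a * c = a' * u" .
  have fs: "f s \<noteq> 0" "f c \<noteq> 0" "f s' \<noteq> 0" "f u \<noteq> 0" using fnz assms uc by auto
  have e1: "f (a * c) * inverse (f (s * c)) = f a * (f c * inverse (f c)) * inverse (f s)"
    using fs assms uc by (simp add: fmult nonzero_inverse_mult_distrib mult.assoc inv_cancel_left)
  have e2: "f (a' * u) * inverse (f (s' * u)) = f a' * (f u * inverse (f u)) * inverse (f s')"
    using fs assms uc(1-4) by (simp add: fmult nonzero_inverse_mult_distrib mult.assoc inv_cancel_left)
  have "f a * inverse (f s) = f (a * c) * inverse (f (s * c))"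
    using e1 fs by simp
  also have "\<dots> = f (a' * u) * inverse (f (s' * u))" using ac uc by simp
  also have "\<dots> = f a' * inverse (f s')"
    using e2 fs by simp
  finally show ?thesis .
qed

definition g :: "'b \<Rightarrow> 'a" where
  "g x = (SOME y. \<exists>a s. a \<in> T \<and> s \<in> T \<and> s \<noteq> 0 \<and> x = a * inverse s \<and> y = f a * inverse (f s))"

lemma g_eq:
  assumes "a \<in> T" "s \<in> T" "s \<noteq> 0"
  shows "g (a * inverse s) = f a * inverse (f s)"
proof -
  let ?P = "\<lambda>y. \<exists>a' s'. a' \<in> T \<and> s' \<in> T \<and> s' \<noteq> 0 \<and> a * inverse s = a' * inverse s' \<and> y = f a' * inverse (f s')"
  have "?P (f a * inverse (f s))" using assms by blast
  hence "?P (g (a * inverse s))" unfolding g_def by (rule someI)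
  then obtain a' s' where "a' \<in> T" "s' \<in> T" "s' \<noteq> 0" "a * inverse s = a' * inverse s'"
    "g (a * inverse s) = f a' * inverse (f s')" by blast
  thus ?thesis using wd[OF assms] by simp
qed

lemma g_T: "x \<in> T \<Longrightarrow> g x = f x"
  using g_eq[of x 1] T1 f1 by simp

lemma g_hom:
  assumes all: "Fr = UNIV"
  shows "rhom g"
  unfolding rhom_def
proof (intro conjI allI)
  show "g 1 = 1" using g_T[OF T1] f1 by simp
next
  fix x y :: 'b
  have "x \<in> Fr" "y \<in> Fr" using all by auto
  then obtain a s a' s' where x: "x = a * inverse s" "a \<in> T" "s \<in> T" "s \<noteq> 0"
    and y: "y = a' * inverse s'" "a' \<in> T" "s' \<in> T" "s' \<noteq> 0" unfolding Fr_def by blast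
  have fs: "f s \<noteq> 0" "f s' \<noteq> 0" using fnz x y by auto
  {
    obtain u c where uc: "u \<in> T" "c \<in> T" "u \<noteq> 0" "c \<noteq> 0" "s' * u = s * c"
      using ore2[OF x(3) y(3) x(4) y(4)] by blast
    have fu: "f u \<noteq> 0" "f c \<noteq> 0" using fnz uc by auto
    have sum: "x + y = (a * c + a' * u) * inverse (s * c)"
      unfolding x(1) y(1) by (rule frac_add) (use uc x y in auto)
    have "g (x + y) = f (a * c + a' * u) * inverse (f (s * c))"
      unfolding sum by (rule g_eq) (use uc x y in \<open>auto intro!: Tadd Tmult\<close>)
    also have "\<dots> = (f a * f c + f a' * f u) * inverse (f s * f c)"
      using uc x y by (simp add: fadd fmult Tmult)
    also have "\<dots> = f a * inverse (f s) + f a' * inverse (f s')"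
    proof -
      have "f s' * f u = f s * f c" using uc x y by (metis fmult)
      thus ?thesis by (intro frac_add[symmetric]) (use fs fu in auto)
    qed
    also have "\<dots> = g x + g y" using g_eq x y by simp
    finally show "g (x + y) = g x + g y" .
  }
  {
    obtain u c where uc: "u \<in> T" "c \<in> T" "u \<noteq> 0" "a' * u = s * c"
      using ore[OF y(2) x(3) x(4)] by blast
    have fu: "f u \<noteq> 0" using fnz uc by auto
    have prod: "x * y = (a * c) * inverse (s' * u)"
      unfolding x(1) y(1) by (rule frac_mult) (use uc x y in auto)
    have "g (x * y) = f (a * c) * inverse (f (s' * u))"
      unfolding prod by (rule g_eq) (use uc x y in \<open>auto intro!: Tmult\<close>)
    also have "\<dots> = (f a * f c) * inverse (f s' * f u)"
      using uc x y by (simp add: fmult)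
    also have "\<dots> = (f a * inverse (f s)) * (f a' * inverse (f s'))"
    proof -
      have "f a' * f u = f s * f c" using uc x y by (metis fmult)
      thus ?thesis by (intro frac_mult[symmetric]) (use fs fu in auto)
    qed
    also have "\<dots> = g x * g y" using g_eq x y by simp
    finally show "g (x * y) = g x * g y" .
  }
qed

end


definition supp :: "('k \<Rightarrow> int) \<Rightarrow> 'k set" where "supp c = {p. c p \<noteq> 0}"
definition LcB :: "('k \<Rightarrow> 'a::ring_1) \<Rightarrow> ('k \<Rightarrow> int) \<Rightarrow> 'a" where
  "LcB bas c = (\<Sum>p\<in>supp c. of_int (c p) * bas p)"
definition sumfun :: "'i set \<Rightarrow> ('i \<Rightarrow> 'k) \<Rightarrow> ('i \<Rightarrow> int) \<Rightarrow> 'k \<Rightarrow> int" where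
  "sumfun I key w = (\<lambda>p. \<Sum>i\<in>I. if key i = p then w i else 0)"
definition conv :: "('k \<Rightarrow> 'k \<Rightarrow> 'k) \<Rightarrow> ('k \<Rightarrow> int) \<Rightarrow> ('k \<Rightarrow> int) \<Rightarrow> 'k \<Rightarrow> int" where
  "conv kk c d = sumfun (supp c \<times> supp d) (\<lambda>q. kk (fst q) (snd q)) (\<lambda>q. c (fst q) * d (snd q))"

lemma LcB_superset:
  assumes "finite S" "supp c \<subseteq> S"
  shows "LcB bas c = (\<Sum>p\<in>S. of_int (c p) * bas p)"
  unfolding LcB_def
  by (rule sum.mono_neutral_left) (use assms in \<open>auto simp: supp_def\<close>)

lemma LcB_add:
  assumes "finite (supp c)" "finite (supp d)"
  shows "LcB bas (\<lambda>p. c p + d p) = LcB bas c + LcB bas d"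
proof -
  let ?S = "supp c \<union> supp d"
  have "LcB bas (\<lambda>p. c p + d p) = (\<Sum>p\<in>?S. of_int (c p + d p) * bas p)"
    by (rule LcB_superset) (use assms in \<open>auto simp: supp_def\<close>)
  also have "\<dots> = (\<Sum>p\<in>?S. of_int (c p) * bas p) + (\<Sum>p\<in>?S. of_int (d p) * bas p)"
    by (simp add: distrib_right sum.distrib)
  also have "\<dots> = LcB bas c + LcB bas d"
  proof -
    have "LcB bas c = (\<Sum>p\<in>?S. of_int (c p) * bas p)" by (rule LcB_superset) (use assms in auto)
    moreover have "LcB bas d = (\<Sum>p\<in>?S. of_int (d p) * bas p)" by (rule LcB_superset) (use assms in auto)
    ultimately show ?thesis by simp
  qed
  finally show ?thesis .
qed

lemma LcB_neg: "LcB bas (\<lambda>p. - c p) = - LcB bas c"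
  unfolding LcB_def supp_def by (simp add: sum_negf)

lemma LcB_zero: "LcB bas (\<lambda>_. 0) = 0"
  unfolding LcB_def supp_def by simp

lemma LcB_delta: "LcB bas (\<lambda>p. if p = q then z else 0) = of_int z * bas q"
proof (cases "z = 0")
  case True
  thus ?thesis by (simp add: LcB_def supp_def)
next
  case False
  hence "supp (\<lambda>p. if p = q then z else 0) = {q}" by (auto simp: supp_def)
  thus ?thesis unfolding LcB_def by simp
qed

lemma supp_sumfun: "supp (sumfun I key w) \<subseteq> key ` I"
proof
  fix p assume p: "p \<in> supp (sumfun I key w)"
  show "p \<in> key ` I"
  proof (rule ccontr)
    assume np: "p \<notin> key ` I"
    have "sumfun I key w p = 0" unfolding sumfun_def
      by (rule sum.neutral) (use np in auto)
    thus False using p by (simp add: supp_def)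
  qed
qed

lemma finite_supp_sumfun: "finite I \<Longrightarrow> finite (supp (sumfun I key w))"
  by (rule finite_subset[OF supp_sumfun]) simp

lemma LcB_sumfun:
  assumes "finite I"
  shows "LcB bas (sumfun I key w) = (\<Sum>i\<in>I. of_int (w i) * bas (key i))"
proof -
  have "LcB bas (sumfun I key w) = (\<Sum>p\<in>key ` I. of_int (sumfun I key w p) * bas p)"
    by (rule LcB_superset) (use assms supp_sumfun[of I key w] in auto)
  also have "\<dots> = (\<Sum>p\<in>key ` I. \<Sum>i\<in>I. if key i = p then of_int (w i) * bas p else 0)"
    unfolding sumfun_def of_int_sum sum_distrib_right by (intro sum.cong refl) auto
  also have "\<dots> = (\<Sum>i\<in>I. \<Sum>p\<in>key ` I. if key i = p then of_int (w i) * bas p else 0)"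
    by (rule sum.swap)
  also have "\<dots> = (\<Sum>i\<in>I. of_int (w i) * bas (key i))"
    using assms by (simp add: sum.delta)
  finally show ?thesis .
qed

lemma LcB_mult:
  assumes "finite (supp c)" "finite (supp d)" "\<And>x y. bas x * bas y = bas (kk x y)"
  shows "LcB bas c * LcB bas d = LcB bas (conv kk c d)"
proof -
  have "LcB bas c * LcB bas d = (\<Sum>x\<in>supp c. \<Sum>y\<in>supp d. of_int (c x) * bas x * (of_int (d y) * bas y))"
    unfolding LcB_def by (rule sum_product)
  also have "\<dots> = (\<Sum>x\<in>supp c. \<Sum>y\<in>supp d. of_int (c x * d y) * bas (kk x y))"
  proof (intro sum.cong refl)
    fix x y
    have "of_int (c x) * bas x * (of_int (d y) * bas y) = of_int (c x) * (bas x * of_int (d y)) * bas y"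
      by (simp add: mult.assoc)
    also have "\<dots> = of_int (c x) * (of_int (d y) * bas x) * bas y"
      by (simp only: mult_of_int_commute[of "d y" "bas x"])
    also have "\<dots> = of_int (c x * d y) * bas (kk x y)"
      by (simp add: mult.assoc assms(3))
    finally show "of_int (c x) * bas x * (of_int (d y) * bas y) = of_int (c x * d y) * bas (kk x y)" .
  qed
  also have "\<dots> = (\<Sum>q\<in>supp c \<times> supp d. of_int (c (fst q) * d (snd q)) * bas (kk (fst q) (snd q)))"
    unfolding sum.cartesian_product by (simp add: case_prod_unfold)
  also have "\<dots> = LcB bas (conv kk c d)"
    unfolding conv_def using assms by (simp add: LcB_sumfun)
  finally show ?thesis .
qed

lemma finite_supp_conv: "finite (supp c) \<Longrightarrow> finite (supp d) \<Longrightarrow> finite (supp (conv kk c d))"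
  unfolding conv_def by (rule finite_supp_sumfun) simp

lemma supp_conv: "p \<in> supp (conv kk c d) \<Longrightarrow> \<exists>x\<in>supp c. \<exists>y\<in>supp d. p = kk x y"
  unfolding conv_def using supp_sumfun by fastforce

lemma Zm_add: "\<alpha> \<in> Zm m \<Longrightarrow> \<beta> \<in> Zm m \<Longrightarrow> (\<lambda>i. \<alpha> i + \<beta> i) \<in> Zm m"
  by (simp add: Zm_def)

context qt begin

definition basis :: "int \<times> (nat \<Rightarrow> int) \<Rightarrow> 'a" where
  "basis p = v powi fst p * Xmon v m \<Lambda> X (snd p)"
definition kmul :: "int \<times> (nat \<Rightarrow> int) \<Rightarrow> int \<times> (nat \<Rightarrow> int) \<Rightarrow> int \<times> (nat \<Rightarrow> int)" where
  "kmul p q = (fst p + fst q + bil m \<Lambda> (snd p) (snd q), \<lambda>i. snd p i + snd q i)"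
definition valid :: "(int \<times> (nat \<Rightarrow> int) \<Rightarrow> int) \<Rightarrow> bool" where
  "valid c \<longleftrightarrow> finite (supp c) \<and> (\<forall>p\<in>supp c. snd p \<in> Zm m)"
definition TT :: "'a set" where
  "TT = {LcB basis c | c. valid c}"

lemma basis_mult: "basis p * basis q = basis (kmul p q)"
proof -
  have "basis p * basis q = (v powi fst p * v powi fst q) * (Xmon v m \<Lambda> X (snd p) * Xmon v m \<Lambda> X (snd q))"
    unfolding basis_def using central_lcomm[OF vpc, of "Xmon v m \<Lambda> X (snd p)" "fst q"] by (simp add: mult.assoc)
  thus ?thesis by (simp add: basis_def kmul_def Xmon_mult vp_add mult.assoc[symmetric])
qed

lemma basis_central: "central c \<Longrightarrow> c * basis p = basis p * c"
  by (rule centralD)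

lemma Lc_indep:
  assumes "valid c" "LcB basis c = 0"
  shows "c p = 0"
proof -
  have H: "\<forall>S c. finite S \<longrightarrow> S \<subseteq> UNIV \<times> Zm m \<longrightarrow>
        (\<Sum>p\<in>S. of_int (c p) * v powi (fst p) * Xmon v m \<Lambda> X (snd p)) = 0 \<longrightarrow> (\<forall>p\<in>S. c p = 0)"
    using qf[unfolded qtorus_frac_def, THEN conjunct2, THEN conjunct2, THEN conjunct2, THEN conjunct2, THEN conjunct1] .
  have "(\<Sum>p\<in>supp c. of_int (c p) * v powi (fst p) * Xmon v m \<Lambda> X (snd p)) = 0"
    using assms(2) by (simp add: LcB_def basis_def mult.assoc)
  moreover have "finite (supp c)" "supp c \<subseteq> UNIV \<times> Zm m" using assms(1) by (auto simp: valid_def)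
  ultimately have "\<forall>p\<in>supp c. c p = 0" using H by blast
  thus ?thesis unfolding supp_def by blast
qed

lemma valid_add: "valid c \<Longrightarrow> valid d \<Longrightarrow> valid (\<lambda>p. c p + d p)"
proof -
  assume c: "valid c" and d: "valid d"
  have sub: "supp (\<lambda>p. c p + d p) \<subseteq> supp c \<union> supp d" unfolding supp_def by auto
  have "finite (supp (\<lambda>p. c p + d p))"
    using c d sub unfolding valid_def by (meson finite_UnI finite_subset)
  moreover have "\<forall>p\<in>supp (\<lambda>p. c p + d p). snd p \<in> Zm m"
    using c d sub unfolding valid_def by blast
  ultimately show ?thesis unfolding valid_def by blast
qed

lemma valid_neg: "valid c \<Longrightarrow> valid (\<lambda>p. - c p)"
  unfolding valid_def supp_def by auto

lemma valid_conv: "valid c \<Longrightarrow> valid d \<Longrightarrow> valid (conv kmul c d)"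
proof -
  assume c: "valid c" and d: "valid d"
  have "finite (supp (conv kmul c d))" using c d finite_supp_conv unfolding valid_def by blast
  moreover have "snd p \<in> Zm m" if pin: "p \<in> supp (conv kmul c d)" for p
  proof -
    obtain x y where "x \<in> supp c" "y \<in> supp d" "p = kmul x y" using supp_conv[of p kmul c d] pin by blast
    thus ?thesis using c d unfolding valid_def kmul_def by (simp add: Zm_add)
  qed
  ultimately show ?thesis unfolding valid_def by blast
qed

lemma valid_delta: "snd q \<in> Zm m \<Longrightarrow> valid (\<lambda>p. if p = q then z else 0)"
  unfolding valid_def supp_def by auto

lemma valid_sumfun: "finite I \<Longrightarrow> (\<And>i. i \<in> I \<Longrightarrow> snd (key i) \<in> Zm m) \<Longrightarrow> valid (sumfun I key w)"
proof -
  assume I: "finite I" and k: "\<And>i. i \<in> I \<Longrightarrow> snd (key i) \<in> Zm m"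
  have "\<forall>p\<in>supp (sumfun I key w). snd p \<in> Zm m" using supp_sumfun[of I key w] k by blast
  thus ?thesis unfolding valid_def using finite_supp_sumfun[OF I] by blast
qed

lemma Zm_zero: "(\<lambda>_. 0) \<in> Zm m" by (simp add: Zm_def)

lemma basis_0: "basis (0, \<lambda>_. 0) = 1" by (simp add: basis_def Xmon_zero)
lemma basis_v: "basis (1, \<lambda>_. 0) = v" by (simp add: basis_def Xmon_zero)
lemma basis_X: "i < m \<Longrightarrow> basis (0, unitvec i) = X i" by (simp add: basis_def Xmon_unitvec)

lemma TT_basis: "snd q \<in> Zm m \<Longrightarrow> basis q \<in> TT"
proof -
  assume q: "snd q \<in> Zm m"
  have "basis q = LcB basis (\<lambda>p. if p = q then 1 else 0)" by (simp add: LcB_delta)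
  thus ?thesis unfolding TT_def using valid_delta[OF q] by blast
qed

lemma TT_1: "1 \<in> TT" using TT_basis[of "(0, \<lambda>_. 0)"] basis_0 Zm_zero by simp
lemma TT_v: "v \<in> TT" using TT_basis[of "(1, \<lambda>_. 0)"] basis_v Zm_zero by simp
lemma unitvec_Zm: "i < m \<Longrightarrow> unitvec i \<in> Zm m" by (simp add: Zm_def unitvec_def)
lemma TT_X: "i < m \<Longrightarrow> X i \<in> TT" using TT_basis[of "(0, unitvec i)"] basis_X unitvec_Zm by simp
lemma TT_Xmon: "\<alpha> \<in> Zm m \<Longrightarrow> Xmon v m \<Lambda> X \<alpha> \<in> TT"
  using TT_basis[of "(0, \<alpha>)"] by (simp add: basis_def)

lemma TT_add: "x \<in> TT \<Longrightarrow> y \<in> TT \<Longrightarrow> x + y \<in> TT"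
proof -
  assume "x \<in> TT" "y \<in> TT"
  then obtain c d where c: "valid c" "x = LcB basis c" and d: "valid d" "y = LcB basis d"
    unfolding TT_def by blast
  have "x + y = LcB basis (\<lambda>p. c p + d p)" using c d by (simp add: LcB_add valid_def)
  thus ?thesis unfolding TT_def using valid_add[OF c(1) d(1)] by blast
qed

lemma TT_mult: "x \<in> TT \<Longrightarrow> y \<in> TT \<Longrightarrow> x * y \<in> TT"
proof -
  assume "x \<in> TT" "y \<in> TT"
  then obtain c d where c: "valid c" "x = LcB basis c" and d: "valid d" "y = LcB basis d"
    unfolding TT_def by blast
  have "x * y = LcB basis (conv kmul c d)" using c d
    by (simp add: LcB_mult basis_mult valid_def)
  thus ?thesis unfolding TT_def using valid_conv[OF c(1) d(1)] by blast
qed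

lemma TT_neg: "x \<in> TT \<Longrightarrow> - x \<in> TT"
proof -
  assume "x \<in> TT"
  then obtain c where c: "valid c" "x = LcB basis c" unfolding TT_def by blast
  have "- x = LcB basis (\<lambda>p. - c p)" using c by (simp add: LcB_neg)
  thus ?thesis unfolding TT_def using valid_neg[OF c(1)] by blast
qed

lemma TT_0: "0 \<in> TT" using TT_add[OF TT_1 TT_neg[OF TT_1]] by simp

lemma TT_sum: "finite S \<Longrightarrow> (\<And>x. x \<in> S \<Longrightarrow> g x \<in> TT) \<Longrightarrow> sum g S \<in> TT"
  by (induction S rule: finite_induct) (simp_all add: TT_0 TT_add)

end


lemma R_sum:
  assumes "0 \<in> R" "\<And>x y. x \<in> R \<Longrightarrow> y \<in> R \<Longrightarrow> x + y \<in> R"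
  shows "finite S \<Longrightarrow> (\<And>x. x \<in> S \<Longrightarrow> g x \<in> R) \<Longrightarrow> sum g S \<in> R"
  by (induction S rule: finite_induct) (use assms in auto)

lemma linsys:
  fixes M :: "'e \<Rightarrow> 'u \<Rightarrow> 'a::division_ring" and R :: "'a set"
  assumes R0: "0 \<in> R" and R1: "1 \<in> R" and Radd: "\<And>x y. x \<in> R \<Longrightarrow> y \<in> R \<Longrightarrow> x + y \<in> R"
    and Rmult: "\<And>x y. x \<in> R \<Longrightarrow> y \<in> R \<Longrightarrow> x * y \<in> R" and Rneg: "\<And>x. x \<in> R \<Longrightarrow> - x \<in> R"
    and Rc: "\<And>x. x \<in> R \<Longrightarrow> central x"
  shows "finite E \<Longrightarrow> finite U \<Longrightarrow> card E < card U \<Longrightarrow> (\<forall>e\<in>E. \<forall>u\<in>U. M e u \<in> R) \<Longrightarrow>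
    \<exists>x. (\<forall>u\<in>U. x u \<in> R) \<and> (\<exists>u\<in>U. x u \<noteq> 0) \<and> (\<forall>e\<in>E. (\<Sum>u\<in>U. M e u * x u) = 0)"
proof (induction E arbitrary: U M rule: finite_induct)
  case empty
  then obtain u0 where "u0 \<in> U" by fastforce
  thus ?case using R0 R1 by (intro exI[of _ "\<lambda>u. if u = u0 then 1 else 0"]) auto
next
  case (insert e E)
  show ?case
  proof (cases "\<forall>u\<in>U. M e u = 0")
    case True
    have "card E < card U" using insert by simp
    then obtain x where x: "\<forall>u\<in>U. x u \<in> R" "\<exists>u\<in>U. x u \<noteq> 0" "\<forall>e\<in>E. (\<Sum>u\<in>U. M e u * x u) = 0"
      using insert.IH[of U M] insert.prems by blast
    thus ?thesis using True by (intro exI[of _ x]) auto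
  next
    case False
    then obtain j where j: "j \<in> U" "M e j \<noteq> 0" by blast
    define U' where "U' = U - {j}"
    define M' where "M' e' u = M e' u * M e j - M e' j * M e u" for e' u
    have cU': "card E < card U'" using insert j by (simp add: U'_def)
    have fU': "finite U'" using insert by (simp add: U'_def)
    have M'R: "\<forall>e'\<in>E. \<forall>u\<in>U'. M' e' u \<in> R"
    proof (intro ballI)
      fix e' u assume eu: "e' \<in> E" "u \<in> U'"
      have m1: "M e' u \<in> R" "M e j \<in> R" "M e' j \<in> R" "M e u \<in> R"
        using insert.prems(3) j eu by (auto simp: U'_def)
      show "M' e' u \<in> R" unfolding M'_def diff_conv_add_uminus
        by (intro Radd Rmult Rneg m1)
    qed
    obtain y where y: "\<forall>u\<in>U'. y u \<in> R" "\<exists>u\<in>U'. y u \<noteq> 0" "\<forall>e'\<in>E. (\<Sum>u\<in>U'. M' e' u * y u) = 0"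
      using insert.IH[OF fU' cU' M'R] by blast
    define x where "x u = (if u = j then - (\<Sum>u'\<in>U'. M e u' * y u') else M e j * y u)" for u
    have xR: "\<forall>u\<in>U. x u \<in> R"
    proof
      fix u assume "u \<in> U"
      show "x u \<in> R"
      proof (cases "u = j")
        case True
        have "(\<Sum>u'\<in>U'. M e u' * y u') \<in> R"
          by (rule R_sum[OF R0 Radd fU']) (use insert.prems y(1) Rmult U'_def in auto)
        thus ?thesis using True Rneg by (simp add: x_def)
      next
        case False
        thus ?thesis using \<open>u \<in> U\<close> insert.prems j y(1) Rmult by (simp add: x_def U'_def)
      qed
    qed
    have xnz: "\<exists>u\<in>U. x u \<noteq> 0"
    proof -
      obtain u where u: "u \<in> U'" "y u \<noteq> 0" using y(2) by blast
      hence "x u \<noteq> 0" using j by (simp add: x_def U'_def)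
      thus ?thesis using u by (auto simp: U'_def)
    qed
    have eqs: "(\<Sum>u\<in>U. M e' u * x u) = (\<Sum>u\<in>U'. M' e' u * y u)" for e'
    proof -
      have "(\<Sum>u\<in>U. M e' u * x u) = M e' j * x j + (\<Sum>u\<in>U'. M e' u * x u)"
        using insert.prems j by (simp add: U'_def sum.remove)
      also have "(\<Sum>u\<in>U'. M e' u * x u) = (\<Sum>u\<in>U'. M e' u * M e j * y u)"
        by (rule sum.cong) (auto simp: x_def U'_def mult.assoc)
      also have "M e' j * x j = - (\<Sum>u\<in>U'. M e' j * M e u * y u)"
        by (simp add: x_def sum_distrib_left mult.assoc)
      finally have "(\<Sum>u\<in>U. M e' u * x u) = - (\<Sum>u\<in>U'. M e' j * M e u * y u) + (\<Sum>u\<in>U'. M e' u * M e j * y u)" .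
      also have "\<dots> = (\<Sum>u\<in>U'. M e' u * M e j * y u - M e' j * M e u * y u)"
        by (simp add: sum_subtractf)
      also have "\<dots> = (\<Sum>u\<in>U'. M' e' u * y u)"
        by (simp add: M'_def left_diff_distrib)
      finally show ?thesis .
    qed
    have "\<forall>e'\<in>insert e E. (\<Sum>u\<in>U. M e' u * x u) = 0"
    proof
      fix e' assume "e' \<in> insert e E"
      show "(\<Sum>u\<in>U. M e' u * x u) = 0"
      proof (cases "e' = e")
        case True
        have "(\<Sum>u\<in>U'. M' e u * y u) = 0"
        proof (rule sum.neutral, intro ballI)
          fix u assume "u \<in> U'"
          have "M e u \<in> R" "M e j \<in> R" using insert.prems j \<open>u \<in> U'\<close> by (auto simp: U'_def)
          hence "M e u * M e j = M e j * M e u" using Rc centralD by blast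
          hence "M' e u = 0" unfolding M'_def by simp
          thus "M' e u * y u = 0" by simp
        qed
        thus ?thesis using True eqs by simp
      next
        case False
        thus ?thesis using eqs y(3) \<open>e' \<in> insert e E\<close> by simp
      qed
    qed
    thus ?thesis using xR xnz by blast
  qed
qed

lemma bern:
  fixes x D :: int
  assumes "D \<ge> 0" "x \<ge> int m * D"
  shows "(x + D) ^ m * (x - int m * D) \<le> x ^ (Suc m)"
  using assms(2)
proof (induction m)
  case 0 thus ?case by simp
next
  case (Suc m)
  have x0: "x \<ge> 0" using Suc.prems assms(1) by (smt (verit) mult_nonneg_nonneg of_nat_0_le_iff)
  have xm: "x \<ge> int m * D" using Suc.prems assms(1) by (simp add: algebra_simps)
  have IH: "(x + D) ^ m * (x - int m * D) \<le> x ^ Suc m" using Suc.IH[OF xm] .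
  have p0: "(x + D) ^ m \<ge> 0" using x0 assms(1) by simp
  have q: "(x + D) * (x - int (Suc m) * D) \<le> x * (x - int m * D)"
  proof -
    have "(x + D) * (x - int (Suc m) * D) = x * (x - int m * D) - (int m + 1) * (D * D)"
      by (simp add: algebra_simps)
    moreover have "(int m + 1) * (D * D) \<ge> 0" by simp
    ultimately show ?thesis by linarith
  qed
  have "(x + D) ^ Suc m * (x - int (Suc m) * D) = (x + D) ^ m * ((x + D) * (x - int (Suc m) * D))"
    by (simp add: algebra_simps)
  also have "\<dots> \<le> (x + D) ^ m * (x * (x - int m * D))"
    by (rule mult_left_mono[OF q p0])
  also have "\<dots> = x * ((x + D) ^ m * (x - int m * D))" by (simp add: algebra_simps)
  also have "\<dots> \<le> x * x ^ Suc m" by (rule mult_left_mono[OF IH x0])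
  finally show ?case by simp
qed

lemma count_bound:
  fixes d :: nat
  shows "\<exists>N::nat. (2 * (N + d) + 1) ^ m < 2 * (2 * N + 1) ^ m"
proof -
  define D where "D = int (2 * d)"
  define N where "N = m * (2 * d)"
  define x where "x = int (2 * N + 1)"
  have D0: "D \<ge> 0" by (simp add: D_def)
  have xge: "x \<ge> int m * D" by (simp add: x_def N_def D_def)
  have b: "(x + D) ^ m * (x - int m * D) \<le> x ^ Suc m" by (rule bern[OF D0 xge])
  have c0: "x - int m * D > 0" by (simp add: x_def N_def D_def)
  have c2: "x < 2 * (x - int m * D)" by (simp add: x_def N_def D_def)
  have xm0: "x ^ m > 0" by (simp add: x_def)
  have "(x + D) ^ m * (x - int m * D) \<le> x ^ m * x" using b by (simp add: mult.commute)
  also have "\<dots> < x ^ m * (2 * (x - int m * D))" using c2 xm0 by simp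
  finally have "(x + D) ^ m * (x - int m * D) < (2 * x ^ m) * (x - int m * D)" by (simp add: algebra_simps)
  hence "(x + D) ^ m < 2 * x ^ m" using c0 by (simp add: mult_less_cancel_right)
  moreover have "x + D = int (2 * (N + d) + 1)" by (simp add: x_def D_def)
  ultimately have "int ((2 * (N + d) + 1) ^ m) < int (2 * (2 * N + 1) ^ m)" by (simp add: x_def algebra_simps)
  thus ?thesis by (intro exI[of _ N]) linarith
qed

definition box :: "nat \<Rightarrow> nat \<Rightarrow> (nat \<Rightarrow> int) set" where
  "box m N = {\<alpha>. (\<forall>i<m. \<bar>\<alpha> i\<bar> \<le> int N) \<and> (\<forall>i\<ge>m. \<alpha> i = 0)}"

lemma box_Zm: "box m N \<subseteq> Zm m" by (auto simp: box_def Zm_def)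

lemma box_eq: "box m N = (\<lambda>f i. if i < m then f i else 0) ` (PiE {..<m} (\<lambda>_. {- int N..int N}))"
proof
  show "box m N \<subseteq> (\<lambda>f i. if i < m then f i else 0) ` (PiE {..<m} (\<lambda>_. {- int N..int N}))"
  proof
    fix \<alpha> assume a: "\<alpha> \<in> box m N"
    have "restrict \<alpha> {..<m} \<in> PiE {..<m} (\<lambda>_. {- int N..int N})" using a by (auto simp: box_def abs_le_iff)
    moreover have "\<alpha> = (\<lambda>i. if i < m then restrict \<alpha> {..<m} i else 0)" using a by (auto simp: box_def)
    ultimately show "\<alpha> \<in> (\<lambda>f i. if i < m then f i else 0) ` (PiE {..<m} (\<lambda>_. {- int N..int N}))" by blast
  qed
  show "(\<lambda>f i. if i < m then f i else 0) ` (PiE {..<m} (\<lambda>_. {- int N..int N})) \<subseteq> box m N"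
    by (auto simp: box_def PiE_def Pi_def abs_le_iff)
qed

lemma box_inj: "inj_on (\<lambda>f i. if i < m then f i else (0::int)) (PiE {..<m} (\<lambda>_. {- int N..int N}))"
proof (rule inj_onI)
  fix f g assume f: "f \<in> PiE {..<m} (\<lambda>_. {- int N..int N})" and g: "g \<in> PiE {..<m} (\<lambda>_. {- int N..int N})"
    and e: "(\<lambda>i. if i < m then f i else 0) = (\<lambda>i. if i < m then g i else 0)"
  show "f = g"
  proof (rule PiE_ext[OF f g])
    fix i assume "i \<in> {..<m}"
    thus "f i = g i" using fun_cong[OF e, of i] by simp
  qed
qed

lemma box_finite: "finite (box m N)"
  unfolding box_eq by (rule finite_imageI) (simp add: finite_PiE)

lemma box_card: "card (box m N) = (2 * N + 1) ^ m"
proof -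
  have "card (box m N) = card (PiE {..<m} (\<lambda>_. {- int N..int N}))"
    unfolding box_eq by (rule card_image[OF box_inj])
  also have "\<dots> = (\<Prod>i<m. card {- int N..int N})" by (simp add: card_PiE)
  also have "\<dots> = (2 * N + 1) ^ m" by (simp add: nat_add_distrib nat_mult_distrib)
  finally show ?thesis .
qed

lemma box_exists: "finite A \<Longrightarrow> A \<subseteq> Zm m \<Longrightarrow> \<exists>d. A \<subseteq> box m d"
proof -
  assume A: "finite A" "A \<subseteq> Zm m"
  define d where "d = nat (\<Sum>\<alpha>\<in>A. \<Sum>i<m. \<bar>\<alpha> i\<bar>)"
  have "A \<subseteq> box m d"
  proof
    fix \<alpha> assume a: "\<alpha> \<in> A"
    have "\<bar>\<alpha> i\<bar> \<le> int d" if "i < m" for i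
    proof -
      have "\<bar>\<alpha> i\<bar> \<le> (\<Sum>i<m. \<bar>\<alpha> i\<bar>)" by (rule member_le_sum) (use that in auto)
      also have "\<dots> \<le> (\<Sum>\<alpha>\<in>A. \<Sum>i<m. \<bar>\<alpha> i\<bar>)"
        by (rule member_le_sum[of \<alpha> A "\<lambda>\<alpha>. \<Sum>i<m. \<bar>\<alpha> i\<bar>"]) (use a A in \<open>auto intro: sum_nonneg\<close>)
      moreover have "(\<Sum>\<alpha>\<in>A. \<Sum>i<m. \<bar>\<alpha> i\<bar>) \<ge> 0" by (intro sum_nonneg) auto
      ultimately show ?thesis by (simp add: d_def)
    qed
    thus "\<alpha> \<in> box m d" using a A by (auto simp: box_def Zm_def)
  qed
  thus ?thesis by blast
qed



lemma box_add: "\<beta> \<in> box m d \<Longrightarrow> \<alpha> \<in> box m N \<Longrightarrow> (\<lambda>i. \<beta> i + \<alpha> i) \<in> box m (N + d)"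
proof -
  assume b: "\<beta> \<in> box m d" and a: "\<alpha> \<in> box m N"
  have "\<bar>\<beta> i + \<alpha> i\<bar> \<le> int (N + d)" if "i < m" for i
  proof -
    have "\<bar>\<beta> i\<bar> \<le> int d" "\<bar>\<alpha> i\<bar> \<le> int N" using a b that by (auto simp: box_def)
    thus ?thesis by linarith
  qed
  moreover have "\<beta> i + \<alpha> i = 0" if "i \<ge> m" for i using a b that by (auto simp: box_def)
  ultimately show ?thesis unfolding box_def by blast
qed

lemma shift_sum:
  assumes "\<alpha> \<in> box m N"
  shows "(\<Sum>\<beta>\<in>box m d. F \<beta> (\<lambda>i. \<beta> i + \<alpha> i))
       = (\<Sum>\<gamma>\<in>box m (N + d). if (\<lambda>i. \<gamma> i - \<alpha> i) \<in> box m d then F (\<lambda>i. \<gamma> i - \<alpha> i) \<gamma> else 0)"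
proof -
  have "(\<Sum>\<gamma>\<in>box m (N + d). if (\<lambda>i. \<gamma> i - \<alpha> i) \<in> box m d then F (\<lambda>i. \<gamma> i - \<alpha> i) \<gamma> else 0)
      = (\<Sum>\<gamma>\<in>{\<gamma>\<in>box m (N + d). (\<lambda>i. \<gamma> i - \<alpha> i) \<in> box m d}. F (\<lambda>i. \<gamma> i - \<alpha> i) \<gamma>)"
    by (rule sum.inter_filter[symmetric]) (rule box_finite)
  also have "\<dots> = (\<Sum>\<beta>\<in>box m d. F \<beta> (\<lambda>i. \<beta> i + \<alpha> i))"
  proof (rule sum.reindex_bij_witness[where i = "\<lambda>\<beta> i. \<beta> i + \<alpha> i" and j = "\<lambda>\<gamma> i. \<gamma> i - \<alpha> i"])
    fix \<gamma> assume "\<gamma> \<in> {\<gamma>\<in>box m (N + d). (\<lambda>i. \<gamma> i - \<alpha> i) \<in> box m d}"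
    thus "(\<lambda>i. \<gamma> i - \<alpha> i + \<alpha> i) = \<gamma>" "(\<lambda>i. \<gamma> i - \<alpha> i) \<in> box m d" by auto
    show "F (\<lambda>i. \<gamma> i - \<alpha> i) (\<lambda>i. \<gamma> i - \<alpha> i + \<alpha> i) = F (\<lambda>i. \<gamma> i - \<alpha> i) \<gamma>" by simp
  next
    fix \<beta> assume b: "\<beta> \<in> box m d"
    show "(\<lambda>i. \<beta> i + \<alpha> i - \<alpha> i) = \<beta>" by simp
    show "(\<lambda>i. \<beta> i + \<alpha> i) \<in> {\<gamma>\<in>box m (N + d). (\<lambda>i. \<gamma> i - \<alpha> i) \<in> box m d}"
      using box_add[OF b assms] b by simp
  qed
  finally show ?thesis by simp
qed

lemma sumfun_inj:
  assumes "inj_on key I" "i0 \<in> I" "finite I"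
  shows "sumfun I key w (key i0) = w i0"
proof -
  have "sumfun I key w (key i0) = (\<Sum>i\<in>I. if i = i0 then w i else 0)"
    unfolding sumfun_def
    by (rule sum.cong[OF refl]) (use assms(1,2) in \<open>auto dest: inj_onD\<close>)
  also have "\<dots> = w i0" using assms(2,3) by simp
  finally show ?thesis .
qed

context qt begin

definition scal :: "(int \<times> (nat \<Rightarrow> int) \<Rightarrow> int) \<Rightarrow> bool" where
  "scal c \<longleftrightarrow> valid c \<and> (\<forall>p\<in>supp c. snd p = (\<lambda>_. 0))"
definition Rv :: "'a set" where
  "Rv = {LcB basis c | c. scal c}"

lemma basis_scal: "snd p = (\<lambda>_. 0) \<Longrightarrow> basis p = v powi fst p"
  by (simp add: basis_def Xmon_zero)

lemma Rv_central: "z \<in> Rv \<Longrightarrow> central z"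
proof -
  assume "z \<in> Rv"
  then obtain c where c: "scal c" "z = LcB basis c" unfolding Rv_def by blast
  have "central (of_int (c p) * basis p)" if "p \<in> supp c" for p
    using c(1) that vpc by (simp add: scal_def basis_scal)
  thus ?thesis unfolding c(2) LcB_def by (intro central_sum) auto
qed

lemma Rv_TT: "z \<in> Rv \<Longrightarrow> z \<in> TT"
  unfolding Rv_def TT_def scal_def by blast

lemma Rv_delta: "basis (j, \<lambda>_. 0) \<in> Rv"
proof -
  have "basis (j, \<lambda>_. 0) = LcB basis (\<lambda>p. if p = (j, \<lambda>_. 0) then 1 else 0)" by (simp add: LcB_delta)
  moreover have "scal (\<lambda>p. if p = (j, \<lambda>_. 0) then 1 else 0)"
    unfolding scal_def using valid_delta[of "(j, \<lambda>_. 0)"] Zm_zero by (auto simp: supp_def)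
  ultimately show ?thesis unfolding Rv_def by blast
qed

lemma Rv_vp: "v powi j \<in> Rv" using Rv_delta[of j] by (simp add: basis_scal)
lemma Rv_1: "1 \<in> Rv" using Rv_vp[of 0] by simp
lemma Rv_0: "0 \<in> Rv"
proof -
  have "scal (\<lambda>_. 0)" by (simp add: scal_def valid_def supp_def)
  thus ?thesis unfolding Rv_def using LcB_zero by (metis (mono_tags, lifting) mem_Collect_eq)
qed

lemma Rv_add: "x \<in> Rv \<Longrightarrow> y \<in> Rv \<Longrightarrow> x + y \<in> Rv"
proof -
  assume "x \<in> Rv" "y \<in> Rv"
  then obtain c d where c: "scal c" "x = LcB basis c" and d: "scal d" "y = LcB basis d"
    unfolding Rv_def by blast
  have "x + y = LcB basis (\<lambda>p. c p + d p)" using c d by (simp add: LcB_add scal_def valid_def)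
  moreover have "scal (\<lambda>p. c p + d p)"
  proof -
    have "valid (\<lambda>p. c p + d p)" using c d valid_add by (simp add: scal_def)
    moreover have "supp (\<lambda>p. c p + d p) \<subseteq> supp c \<union> supp d" by (auto simp: supp_def)
    ultimately show ?thesis using c d unfolding scal_def by blast
  qed
  ultimately show ?thesis unfolding Rv_def by blast
qed

lemma Rv_neg: "x \<in> Rv \<Longrightarrow> - x \<in> Rv"
proof -
  assume "x \<in> Rv"
  then obtain c where c: "scal c" "x = LcB basis c" unfolding Rv_def by blast
  have "- x = LcB basis (\<lambda>p. - c p)" using c by (simp add: LcB_neg)
  moreover have "scal (\<lambda>p. - c p)" using c valid_neg by (auto simp: scal_def supp_def)
  ultimately show ?thesis unfolding Rv_def by blast
qed

lemma bil_zero_left: "bil m \<Lambda> (\<lambda>_. 0) \<beta> = 0" by (simp add: bil_def)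

lemma Rv_mult: "x \<in> Rv \<Longrightarrow> y \<in> Rv \<Longrightarrow> x * y \<in> Rv"
proof -
  assume "x \<in> Rv" "y \<in> Rv"
  then obtain c d where c: "scal c" "x = LcB basis c" and d: "scal d" "y = LcB basis d"
    unfolding Rv_def by blast
  have "x * y = LcB basis (conv kmul c d)" using c d
    by (simp add: LcB_mult basis_mult scal_def valid_def)
  moreover have "scal (conv kmul c d)"
  proof -
    have "valid (conv kmul c d)" using c d valid_conv by (simp add: scal_def)
    moreover have "snd p = (\<lambda>_. 0)" if pin: "p \<in> supp (conv kmul c d)" for p
    proof -
      obtain q1 q2 where "q1 \<in> supp c" "q2 \<in> supp d" "p = kmul q1 q2" using supp_conv[of p kmul c d] pin by blast
      thus ?thesis using c d by (simp add: scal_def kmul_def)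
    qed
    ultimately show ?thesis unfolding scal_def by blast
  qed
  ultimately show ?thesis unfolding Rv_def by blast
qed

definition coef :: "(int \<times> (nat \<Rightarrow> int) \<Rightarrow> int) \<Rightarrow> (nat \<Rightarrow> int) \<Rightarrow> 'a" where
  "coef c \<beta> = LcB basis (sumfun {p\<in>supp c. snd p = \<beta>} (\<lambda>p. (fst p, \<lambda>_. 0)) c)"

lemma coef_eq: "finite (supp c) \<Longrightarrow> coef c \<beta> = (\<Sum>p\<in>{p\<in>supp c. snd p = \<beta>}. of_int (c p) * v powi fst p)"
  unfolding coef_def by (simp add: LcB_sumfun basis_scal)

lemma coef_Rv: "valid c \<Longrightarrow> coef c \<beta> \<in> Rv"
proof -
  assume c: "valid c"
  let ?I = "{p\<in>supp c. snd p = \<beta>}"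
  have fI: "finite ?I" using c by (simp add: valid_def)
  have "valid (sumfun ?I (\<lambda>p. (fst p, \<lambda>_. 0)) c)" by (rule valid_sumfun[OF fI]) (simp add: Zm_zero)
  moreover have "\<forall>p\<in>supp (sumfun ?I (\<lambda>p. (fst p, \<lambda>_. 0)) c). snd p = (\<lambda>_. 0)"
    using supp_sumfun[of ?I "\<lambda>p. (fst p, \<lambda>_. 0)" c] by auto
  ultimately show ?thesis unfolding Rv_def coef_def scal_def by blast
qed

lemma decomp:
  assumes c: "valid c" and B: "finite B" "snd ` supp c \<subseteq> B"
  shows "LcB basis c = (\<Sum>\<beta>\<in>B. coef c \<beta> * Xmon v m \<Lambda> X \<beta>)"
proof -
  have fc: "finite (supp c)" using c by (simp add: valid_def)
  have "LcB basis c = (\<Sum>\<beta>\<in>snd ` supp c. \<Sum>p\<in>{p\<in>supp c. snd p = \<beta>}. of_int (c p) * basis p)"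
    unfolding LcB_def by (rule sum.image_gen[OF fc])
  also have "\<dots> = (\<Sum>\<beta>\<in>snd ` supp c. coef c \<beta> * Xmon v m \<Lambda> X \<beta>)"
  proof (rule sum.cong[OF refl])
    fix \<beta> assume "\<beta> \<in> snd ` supp c"
    have "(\<Sum>p\<in>{p\<in>supp c. snd p = \<beta>}. of_int (c p) * basis p)
        = (\<Sum>p\<in>{p\<in>supp c. snd p = \<beta>}. of_int (c p) * v powi fst p * Xmon v m \<Lambda> X \<beta>)"
      by (rule sum.cong[OF refl]) (simp add: basis_def mult.assoc)
    also have "\<dots> = coef c \<beta> * Xmon v m \<Lambda> X \<beta>"
      using fc by (simp add: coef_eq sum_distrib_right)
    finally show "(\<Sum>p\<in>{p\<in>supp c. snd p = \<beta>}. of_int (c p) * basis p) = coef c \<beta> * Xmon v m \<Lambda> X \<beta>" .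
  qed
  also have "\<dots> = (\<Sum>\<beta>\<in>B. coef c \<beta> * Xmon v m \<Lambda> X \<beta>)"
  proof (rule sum.mono_neutral_left[OF B(1) B(2)])
    show "\<forall>\<beta>\<in>B - snd ` supp c. coef c \<beta> * Xmon v m \<Lambda> X \<beta> = 0"
    proof
      fix \<beta> assume "\<beta> \<in> B - snd ` supp c"
      hence nb: "\<beta> \<notin> snd ` supp c" by blast
      have se: "{p\<in>supp c. snd p = \<beta>} = {}"
      proof (rule ccontr)
        assume "{p\<in>supp c. snd p = \<beta>} \<noteq> {}"
        then obtain p where "p \<in> supp c" "snd p = \<beta>" by blast
        hence "\<beta> \<in> snd ` supp c" by force
        thus False using nb by blast
      qed
      show "coef c \<beta> * Xmon v m \<Lambda> X \<beta> = 0" unfolding coef_eq[OF fc] se by simp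
    qed
  qed
  finally show ?thesis .
qed

lemma Rv_indep:
  assumes A: "finite A" "A \<subseteq> Zm m" and r: "\<forall>\<alpha>\<in>A. r \<alpha> \<in> Rv"
    and z: "(\<Sum>\<alpha>\<in>A. r \<alpha> * Xmon v m \<Lambda> X \<alpha>) = 0"
  shows "\<forall>\<alpha>\<in>A. r \<alpha> = 0"
proof -
  define cr where "cr \<alpha> = (SOME c. scal c \<and> r \<alpha> = LcB basis c)" for \<alpha>
  have cr: "scal (cr \<alpha>) \<and> r \<alpha> = LcB basis (cr \<alpha>)" if "\<alpha> \<in> A" for \<alpha>
  proof -
    have "\<exists>c. scal c \<and> r \<alpha> = LcB basis c" using r that unfolding Rv_def by blast
    thus ?thesis unfolding cr_def by (rule someI_ex)
  qed
  define I where "I = Sigma A (\<lambda>\<alpha>. supp (cr \<alpha>))"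
  define key where "key q = (fst (snd q), fst q)" for q :: "(nat \<Rightarrow> int) \<times> int \<times> (nat \<Rightarrow> int)"
  define w where "w q = cr (fst q) (snd q)" for q :: "(nat \<Rightarrow> int) \<times> int \<times> (nat \<Rightarrow> int)"
  have fI: "finite I" unfolding I_def using A cr by (auto simp: scal_def valid_def)
  have vC: "valid (sumfun I key w)"
    by (rule valid_sumfun[OF fI]) (use A in \<open>auto simp: I_def key_def\<close>)
  have "LcB basis (sumfun I key w) = (\<Sum>q\<in>I. of_int (w q) * basis (key q))"
    by (rule LcB_sumfun[OF fI])
  also have "\<dots> = (\<Sum>\<alpha>\<in>A. \<Sum>p\<in>supp (cr \<alpha>). of_int (cr \<alpha> p) * basis (fst p, \<alpha>))"
    unfolding I_def using A cr by (subst sum.Sigma) (auto simp: key_def w_def scal_def valid_def case_prod_unfold)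
  also have "\<dots> = (\<Sum>\<alpha>\<in>A. r \<alpha> * Xmon v m \<Lambda> X \<alpha>)"
  proof (rule sum.cong[OF refl])
    fix \<alpha> assume a: "\<alpha> \<in> A"
    have "(\<Sum>p\<in>supp (cr \<alpha>). of_int (cr \<alpha> p) * basis (fst p, \<alpha>))
        = (\<Sum>p\<in>supp (cr \<alpha>). of_int (cr \<alpha> p) * basis p * Xmon v m \<Lambda> X \<alpha>)"
    proof (rule sum.cong[OF refl])
      fix p assume "p \<in> supp (cr \<alpha>)"
      hence "snd p = (\<lambda>_. 0)" using cr[OF a] by (simp add: scal_def)
      thus "of_int (cr \<alpha> p) * basis (fst p, \<alpha>) = of_int (cr \<alpha> p) * basis p * Xmon v m \<Lambda> X \<alpha>"
        by (simp add: basis_def mult.assoc Xmon_zero)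
    qed
    also have "\<dots> = r \<alpha> * Xmon v m \<Lambda> X \<alpha>"
      using cr[OF a] by (simp add: LcB_def sum_distrib_right)
    finally show "(\<Sum>p\<in>supp (cr \<alpha>). of_int (cr \<alpha> p) * basis (fst p, \<alpha>)) = r \<alpha> * Xmon v m \<Lambda> X \<alpha>" .
  qed
  also have "\<dots> = 0" by (rule z)
  finally have C0: "LcB basis (sumfun I key w) = 0" .
  have inj: "inj_on key I"
  proof (rule inj_onI)
    fix q1 q2 assume q: "q1 \<in> I" "q2 \<in> I" "key q1 = key q2"
    obtain \<alpha>1 p1 \<alpha>2 p2 where qq: "q1 = (\<alpha>1, p1)" "q2 = (\<alpha>2, p2)" by (cases q1, cases q2) auto
    have "\<alpha>1 \<in> A" "p1 \<in> supp (cr \<alpha>1)" "\<alpha>2 \<in> A" "p2 \<in> supp (cr \<alpha>2)" using q qq by (auto simp: I_def)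
    hence "snd p1 = (\<lambda>_. 0)" "snd p2 = (\<lambda>_. 0)" using cr by (auto simp: scal_def)
    moreover have "fst p1 = fst p2" "\<alpha>1 = \<alpha>2" using q(3) qq by (auto simp: key_def)
    ultimately show "q1 = q2" using qq by (simp add: prod_eq_iff)
  qed
  show ?thesis
  proof
    fix \<alpha> assume a: "\<alpha> \<in> A"
    have "supp (cr \<alpha>) = {}"
    proof (rule ccontr)
      assume "supp (cr \<alpha>) \<noteq> {}"
      then obtain p where p: "p \<in> supp (cr \<alpha>)" by blast
      hence "(\<alpha>, p) \<in> I" using a by (simp add: I_def)
      hence "sumfun I key w (key (\<alpha>, p)) = w (\<alpha>, p)" using sumfun_inj[OF inj _ fI] by blast
      moreover have "sumfun I key w (key (\<alpha>, p)) = 0" using Lc_indep[OF vC C0] .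
      ultimately show False using p by (simp add: w_def supp_def)
    qed
    thus "r \<alpha> = 0" using cr[OF a] by (simp add: LcB_def)
  qed
qed

end


context qt begin

lemma prod_shift:
  assumes K: "\<And>\<beta>. central (K \<beta>)" and y: "\<And>\<alpha>. central (y \<alpha>)"
  shows "(\<Sum>\<beta>\<in>box m d. K \<beta> * Xmon v m \<Lambda> X \<beta>) * (\<Sum>\<alpha>\<in>box m N. y \<alpha> * Xmon v m \<Lambda> X \<alpha>)
   = (\<Sum>\<gamma>\<in>box m (N + d). (\<Sum>\<alpha>\<in>box m N. (if (\<lambda>i. \<gamma> i - \<alpha> i) \<in> box m d
          then K (\<lambda>i. \<gamma> i - \<alpha> i) * v powi bil m \<Lambda> (\<lambda>i. \<gamma> i - \<alpha> i) \<alpha> else 0) * y \<alpha>) * Xmon v m \<Lambda> X \<gamma>)"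
proof -
  define G where "G \<beta> \<alpha> \<gamma> = K \<beta> * v powi bil m \<Lambda> \<beta> \<alpha> * y \<alpha> * Xmon v m \<Lambda> X \<gamma>" for \<beta> \<alpha> \<gamma>
  have "(\<Sum>\<beta>\<in>box m d. K \<beta> * Xmon v m \<Lambda> X \<beta>) * (\<Sum>\<alpha>\<in>box m N. y \<alpha> * Xmon v m \<Lambda> X \<alpha>)
      = (\<Sum>\<beta>\<in>box m d. \<Sum>\<alpha>\<in>box m N. K \<beta> * Xmon v m \<Lambda> X \<beta> * (y \<alpha> * Xmon v m \<Lambda> X \<alpha>))"
    by (rule sum_product)
  also have "\<dots> = (\<Sum>\<beta>\<in>box m d. \<Sum>\<alpha>\<in>box m N. G \<beta> \<alpha> (\<lambda>i. \<beta> i + \<alpha> i))"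
  proof (intro sum.cong refl)
    fix \<beta> \<alpha>
    have "K \<beta> * Xmon v m \<Lambda> X \<beta> * (y \<alpha> * Xmon v m \<Lambda> X \<alpha>) = K \<beta> * (Xmon v m \<Lambda> X \<beta> * y \<alpha>) * Xmon v m \<Lambda> X \<alpha>"
      by (simp add: mult.assoc)
    also have "\<dots> = K \<beta> * y \<alpha> * (Xmon v m \<Lambda> X \<beta> * Xmon v m \<Lambda> X \<alpha>)"
    proof -
      have "Xmon v m \<Lambda> X \<beta> * (y \<alpha> * Xmon v m \<Lambda> X \<alpha>) = y \<alpha> * (Xmon v m \<Lambda> X \<beta> * Xmon v m \<Lambda> X \<alpha>)"
        by (rule central_lcomm[OF y])
      thus ?thesis by (simp add: mult.assoc)
    qed
    also have "\<dots> = K \<beta> * y \<alpha> * v powi bil m \<Lambda> \<beta> \<alpha> * Xmon v m \<Lambda> X (\<lambda>i. \<beta> i + \<alpha> i)"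
      by (simp add: Xmon_mult mult.assoc)
    also have "\<dots> = G \<beta> \<alpha> (\<lambda>i. \<beta> i + \<alpha> i)"
      unfolding G_def using central_comm[OF vpc, of "y \<alpha>" "bil m \<Lambda> \<beta> \<alpha>"] by (simp add: mult.assoc)
    finally show "K \<beta> * Xmon v m \<Lambda> X \<beta> * (y \<alpha> * Xmon v m \<Lambda> X \<alpha>) = G \<beta> \<alpha> (\<lambda>i. \<beta> i + \<alpha> i)" .
  qed
  also have "\<dots> = (\<Sum>\<alpha>\<in>box m N. \<Sum>\<beta>\<in>box m d. G \<beta> \<alpha> (\<lambda>i. \<beta> i + \<alpha> i))"
    by (rule sum.swap)
  also have "\<dots> = (\<Sum>\<alpha>\<in>box m N. \<Sum>\<gamma>\<in>box m (N + d). if (\<lambda>i. \<gamma> i - \<alpha> i) \<in> box m d then G (\<lambda>i. \<gamma> i - \<alpha> i) \<alpha> \<gamma> else 0)"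
  proof (rule sum.cong[OF refl])
    fix \<alpha> assume "\<alpha> \<in> box m N"
    thus "(\<Sum>\<beta>\<in>box m d. G \<beta> \<alpha> (\<lambda>i. \<beta> i + \<alpha> i)) = (\<Sum>\<gamma>\<in>box m (N + d). if (\<lambda>i. \<gamma> i - \<alpha> i) \<in> box m d then G (\<lambda>i. \<gamma> i - \<alpha> i) \<alpha> \<gamma> else 0)"
      by (rule shift_sum[where F = "\<lambda>\<beta> \<gamma>. G \<beta> \<alpha> \<gamma>"])
  qed
  also have "\<dots> = (\<Sum>\<gamma>\<in>box m (N + d). \<Sum>\<alpha>\<in>box m N. if (\<lambda>i. \<gamma> i - \<alpha> i) \<in> box m d then G (\<lambda>i. \<gamma> i - \<alpha> i) \<alpha> \<gamma> else 0)"
    by (rule sum.swap)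
  also have "\<dots> = (\<Sum>\<gamma>\<in>box m (N + d). (\<Sum>\<alpha>\<in>box m N. (if (\<lambda>i. \<gamma> i - \<alpha> i) \<in> box m d
          then K (\<lambda>i. \<gamma> i - \<alpha> i) * v powi bil m \<Lambda> (\<lambda>i. \<gamma> i - \<alpha> i) \<alpha> else 0) * y \<alpha>) * Xmon v m \<Lambda> X \<gamma>)"
    unfolding sum_distrib_right G_def by (intro sum.cong refl) simp
  finally show ?thesis .
qed

lemma TT_ore:
  assumes a: "a \<in> TT" and s: "s \<in> TT" and s0: "s \<noteq> 0"
  shows "\<exists>u c. u \<in> TT \<and> c \<in> TT \<and> u \<noteq> 0 \<and> a * u = s * c"
proof -
  obtain c1 c2 where c1: "valid c1" "a = LcB basis c1" and c2: "valid c2" "s = LcB basis c2"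
    using a s unfolding TT_def by blast
  have fB: "finite (snd ` (supp c1 \<union> supp c2))" using c1 c2 by (simp add: valid_def)
  have BZ: "snd ` (supp c1 \<union> supp c2) \<subseteq> Zm m" using c1 c2 by (auto simp: valid_def)
  obtain d where d: "snd ` (supp c1 \<union> supp c2) \<subseteq> box m d" using box_exists[OF fB BZ] by blast
  have aeq: "a = (\<Sum>\<beta>\<in>box m d. coef c1 \<beta> * Xmon v m \<Lambda> X \<beta>)"
    unfolding c1(2) by (rule decomp[OF c1(1) box_finite]) (use d in auto)
  have seq: "s = (\<Sum>\<beta>\<in>box m d. coef c2 \<beta> * Xmon v m \<Lambda> X \<beta>)"
    unfolding c2(2) by (rule decomp[OF c2(1) box_finite]) (use d in auto)
  obtain N where N: "(2 * (N + d) + 1) ^ m < 2 * (2 * N + 1) ^ m" using count_bound by blast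
  define K1 where "K1 \<gamma> \<alpha> = (if (\<lambda>i. \<gamma> i - \<alpha> i) \<in> box m d
          then coef c1 (\<lambda>i. \<gamma> i - \<alpha> i) * v powi bil m \<Lambda> (\<lambda>i. \<gamma> i - \<alpha> i) \<alpha> else 0)" for \<gamma> \<alpha>
  define K2 where "K2 \<gamma> \<alpha> = (if (\<lambda>i. \<gamma> i - \<alpha> i) \<in> box m d
          then coef c2 (\<lambda>i. \<gamma> i - \<alpha> i) * v powi bil m \<Lambda> (\<lambda>i. \<gamma> i - \<alpha> i) \<alpha> else 0)" for \<gamma> \<alpha>
  define M where "M \<gamma> \<xi> = (case \<xi> of Inl \<alpha> \<Rightarrow> K1 \<gamma> \<alpha> | Inr \<alpha> \<Rightarrow> - K2 \<gamma> \<alpha>)" for \<gamma> \<xi>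
  have K1R: "K1 \<gamma> \<alpha> \<in> Rv" for \<gamma> \<alpha> unfolding K1_def using Rv_0 Rv_mult coef_Rv[OF c1(1)] Rv_vp by auto
  have K2R: "K2 \<gamma> \<alpha> \<in> Rv" for \<gamma> \<alpha> unfolding K2_def using Rv_0 Rv_mult coef_Rv[OF c2(1)] Rv_vp by auto
  have MR: "\<forall>\<gamma>\<in>box m (N + d). \<forall>\<xi>\<in>box m N <+> box m N. M \<gamma> \<xi> \<in> Rv"
    unfolding M_def using K1R K2R Rv_neg by (auto split: sum.splits)
  have card: "card (box m (N + d)) < card (box m N <+> box m N)"
    using N by (simp add: box_card card_Plus box_finite)
  obtain x where xR: "\<forall>\<xi>\<in>box m N <+> box m N. x \<xi> \<in> Rv" and xnz: "\<exists>\<xi>\<in>box m N <+> box m N. x \<xi> \<noteq> 0"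
    and xeq: "\<forall>\<gamma>\<in>box m (N + d). (\<Sum>\<xi>\<in>box m N <+> box m N. M \<gamma> \<xi> * x \<xi>) = 0"
  proof -
    have fU: "finite (box m N <+> box m N)" by (simp add: box_finite)
    show ?thesis using linsys[OF Rv_0 Rv_1 Rv_add Rv_mult Rv_neg Rv_central box_finite fU card MR] that by blast
  qed
  define u where "u = (\<Sum>\<alpha>\<in>box m N. x (Inl \<alpha>) * Xmon v m \<Lambda> X \<alpha>)"
  define w where "w = (\<Sum>\<alpha>\<in>box m N. x (Inr \<alpha>) * Xmon v m \<Lambda> X \<alpha>)"
  have y1R: "\<forall>\<alpha>\<in>box m N. x (Inl \<alpha>) \<in> Rv" and y2R: "\<forall>\<alpha>\<in>box m N. x (Inr \<alpha>) \<in> Rv" using xR by auto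
  have uT: "u \<in> TT" unfolding u_def
  proof (rule TT_sum[OF box_finite])
    fix \<alpha> assume "\<alpha> \<in> box m N"
    thus "x (Inl \<alpha>) * Xmon v m \<Lambda> X \<alpha> \<in> TT"
      using y1R box_Zm by (intro TT_mult Rv_TT TT_Xmon) auto
  qed
  have wT: "w \<in> TT" unfolding w_def
  proof (rule TT_sum[OF box_finite])
    fix \<alpha> assume "\<alpha> \<in> box m N"
    thus "x (Inr \<alpha>) * Xmon v m \<Lambda> X \<alpha> \<in> TT"
      using y2R box_Zm by (intro TT_mult Rv_TT TT_Xmon) auto
  qed
  have cK1: "central (coef c1 \<beta>)" for \<beta> using coef_Rv[OF c1(1)] Rv_central by blast
  have cK2: "central (coef c2 \<beta>)" for \<beta> using coef_Rv[OF c2(1)] Rv_central by blast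
  define y1 where "y1 \<alpha> = (if \<alpha> \<in> box m N then x (Inl \<alpha>) else 0)" for \<alpha>
  define y2 where "y2 \<alpha> = (if \<alpha> \<in> box m N then x (Inr \<alpha>) else 0)" for \<alpha>
  have cy1: "central (y1 \<alpha>)" for \<alpha> unfolding y1_def using y1R Rv_central by auto
  have cy2: "central (y2 \<alpha>)" for \<alpha> unfolding y2_def using y2R Rv_central by auto
  have u_eq: "u = (\<Sum>\<alpha>\<in>box m N. y1 \<alpha> * Xmon v m \<Lambda> X \<alpha>)" unfolding u_def y1_def by simp
  have w_eq: "w = (\<Sum>\<alpha>\<in>box m N. y2 \<alpha> * Xmon v m \<Lambda> X \<alpha>)" unfolding w_def y2_def by simp
  have au: "a * u = (\<Sum>\<gamma>\<in>box m (N + d). (\<Sum>\<alpha>\<in>box m N. K1 \<gamma> \<alpha> * y1 \<alpha>) * Xmon v m \<Lambda> X \<gamma>)"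
    unfolding aeq u_eq K1_def by (rule prod_shift[OF cK1 cy1])
  have sw: "s * w = (\<Sum>\<gamma>\<in>box m (N + d). (\<Sum>\<alpha>\<in>box m N. K2 \<gamma> \<alpha> * y2 \<alpha>) * Xmon v m \<Lambda> X \<gamma>)"
    unfolding seq w_eq K2_def by (rule prod_shift[OF cK2 cy2])
  have coeq: "(\<Sum>\<alpha>\<in>box m N. K1 \<gamma> \<alpha> * y1 \<alpha>) = (\<Sum>\<alpha>\<in>box m N. K2 \<gamma> \<alpha> * y2 \<alpha>)" if g: "\<gamma> \<in> box m (N + d)" for \<gamma>
  proof -
    have "0 = (\<Sum>\<xi>\<in>box m N <+> box m N. M \<gamma> \<xi> * x \<xi>)" using xeq g by simp
    also have "\<dots> = (\<Sum>\<alpha>\<in>box m N. K1 \<gamma> \<alpha> * y1 \<alpha>) + (\<Sum>\<alpha>\<in>box m N. - K2 \<gamma> \<alpha> * y2 \<alpha>)"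
      by (simp add: sum.Plus box_finite M_def y1_def y2_def)
    finally show ?thesis by (simp add: sum_negf)
  qed
  have eq: "a * u = s * w" unfolding au sw using coeq by (intro sum.cong refl) auto
  have u0: "u \<noteq> 0"
  proof
    assume u0: "u = 0"
    have z1: "\<forall>\<alpha>\<in>box m N. x (Inl \<alpha>) = 0"
      by (rule Rv_indep[OF box_finite box_Zm y1R]) (use u0 u_def in simp)
    have "s * w = 0" using eq u0 by simp
    hence "w = 0" using s0 by simp
    hence z2: "\<forall>\<alpha>\<in>box m N. x (Inr \<alpha>) = 0"
      by (intro Rv_indep[OF box_finite box_Zm y2R]) (simp add: w_def)
    show False using xnz z1 z2 by auto
  qed
  show ?thesis using uT wT u0 eq by blast
qed

end


context main begin

lemma mulv_add: "mulv m M (\<lambda>i. \<alpha> i + \<beta> i) = (\<lambda>i. mulv m M \<alpha> i + mulv m M \<beta> i)"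
  by (rule ext) (simp add: mulv_def sum.distrib algebra_simps)

lemma mulv_zero: "mulv m M (\<lambda>_. 0) = (\<lambda>_. 0)"
  by (rule ext) (simp add: mulv_def)

lemma mulv_Zm: "mulv m M \<alpha> \<in> Zm m" by (simp add: mulv_def Zm_def)

lemma E_invol: "\<alpha> \<in> Zm m \<Longrightarrow> mulv m (E e) (mulv m (E e) \<alpha>) = \<alpha>"
proof (rule ext)
  fix j assume a: "\<alpha> \<in> Zm m"
  show "mulv m (E e) (mulv m (E e) \<alpha>) j = \<alpha> j"
  proof (cases "j < m")
    case True
    thus ?thesis using km by (cases "j = k") (simp_all add: mulv_E)
  next
    case False
    thus ?thesis using a by (simp add: mulv_E Zm_def)
  qed
qed

context
  fixes e :: int
  assumes e: "e = 1 \<or> e = -1"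
begin

definition bas2 :: "int \<times> (nat \<Rightarrow> int) \<Rightarrow> 'a" where
  "bas2 p = va powi fst p * Xmon va m \<Lambda> X (mulv m (E e) (snd p))"

lemma bas2_mult: "bas2 p * bas2 q = bas2 (Bq.kmul p q)"
proof -
  have "bas2 p * bas2 q = A.basis (fst p, mulv m (E e) (snd p)) * A.basis (fst q, mulv m (E e) (snd q))"
    by (simp add: bas2_def A.basis_def)
  also have "\<dots> = A.basis (A.kmul (fst p, mulv m (E e) (snd p)) (fst q, mulv m (E e) (snd q)))"
    by (rule A.basis_mult)
  also have "\<dots> = bas2 (Bq.kmul p q)"
    by (simp add: A.basis_def bas2_def A.kmul_def Bq.kmul_def mulv_add bilE_any[OF e])
  finally show ?thesis .
qed

definition fE :: "'b \<Rightarrow> 'a" where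
  "fE x = LcB bas2 (SOME c. Bq.valid c \<and> x = LcB Bq.basis c)"

lemma fE_eq: "Bq.valid c \<Longrightarrow> fE (LcB Bq.basis c) = LcB bas2 c"
proof -
  assume c: "Bq.valid c"
  define c' where "c' = (SOME c'. Bq.valid c' \<and> LcB Bq.basis c = LcB Bq.basis c')"
  have "\<exists>c'. Bq.valid c' \<and> LcB Bq.basis c = LcB Bq.basis c'" using c by blast
  hence "Bq.valid c' \<and> LcB Bq.basis c = LcB Bq.basis c'" unfolding c'_def by (rule someI_ex)
  hence c'v: "Bq.valid c'" and c'e: "LcB Bq.basis c = LcB Bq.basis c'" by auto
  have v: "Bq.valid (\<lambda>p. c' p + - c p)" using Bq.valid_add[OF c'v Bq.valid_neg[OF c]] .
  have f1: "finite (supp c')" using c'v by (simp add: Bq.valid_def)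
  have f2: "finite (supp (\<lambda>p. - c p))" using Bq.valid_neg[OF c] by (simp add: Bq.valid_def)
  have "LcB Bq.basis (\<lambda>p. c' p + - c p) = LcB Bq.basis c' + LcB Bq.basis (\<lambda>p. - c p)"
    by (rule LcB_add[OF f1 f2])
  also have "\<dots> = 0" using c'e by (simp add: LcB_neg)
  finally have "LcB Bq.basis (\<lambda>p. c' p + - c p) = 0" .
  hence "\<And>p. c' p + - c p = 0" using Bq.Lc_indep[OF v] by blast
  hence "c' = c" by (intro ext) (simp add: algebra_simps eq_neg_iff_add_eq_0[symmetric])
  moreover have "fE (LcB Bq.basis c) = LcB bas2 c'" unfolding fE_def c'_def by simp
  ultimately show ?thesis by simp
qed

lemma E_inj: "inj_on (mulv m (E e)) (Zm m)"
  by (rule inj_onI) (metis E_invol)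

lemma fE_nz:
  assumes c: "Bq.valid c" and nz: "LcB Bq.basis c \<noteq> 0"
  shows "LcB bas2 c \<noteq> 0"
proof
  assume z: "LcB bas2 c = 0"
  define key where "key p = (fst p, mulv m (E e) (snd p))" for p :: "int \<times> (nat \<Rightarrow> int)"
  have fc: "finite (supp c)" using c by (simp add: Bq.valid_def)
  have vC: "A.valid (sumfun (supp c) key c)"
    by (rule A.valid_sumfun[OF fc]) (simp add: key_def mulv_Zm)
  have "LcB A.basis (sumfun (supp c) key c) = LcB bas2 c"
    by (simp only: LcB_sumfun[OF fc]) (simp add: key_def A.basis_def bas2_def LcB_def)
  hence C0: "LcB A.basis (sumfun (supp c) key c) = 0" using z by simp
  have inj: "inj_on key (supp c)"
  proof (rule inj_onI)
    fix p q assume pq: "p \<in> supp c" "q \<in> supp c" "key p = key q"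
    have "snd p \<in> Zm m" "snd q \<in> Zm m" using c pq by (auto simp: Bq.valid_def)
    moreover have "fst p = fst q" "mulv m (E e) (snd p) = mulv m (E e) (snd q)" using pq(3) by (auto simp: key_def)
    ultimately show "p = q" using E_inj by (simp add: prod_eq_iff inj_on_def)
  qed
  have "supp c = {}"
  proof (rule ccontr)
    assume "supp c \<noteq> {}"
    then obtain p where p: "p \<in> supp c" by blast
    have "sumfun (supp c) key c (key p) = c p" by (rule sumfun_inj[OF inj p fc])
    moreover have "sumfun (supp c) key c (key p) = 0" using A.Lc_indep[OF vC C0] .
    ultimately show False using p by (simp add: supp_def)
  qed
  hence "LcB Bq.basis c = 0" by (simp add: LcB_def)
  thus False using nz by simp
qed

lemma ore_inst: "ore_setup Bq.TT fE"
proof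
  show "1 \<in> Bq.TT" by (rule Bq.TT_1)
  show "\<And>x y. x \<in> Bq.TT \<Longrightarrow> y \<in> Bq.TT \<Longrightarrow> x + y \<in> Bq.TT" by (rule Bq.TT_add)
  show "\<And>x y. x \<in> Bq.TT \<Longrightarrow> y \<in> Bq.TT \<Longrightarrow> x * y \<in> Bq.TT" by (rule Bq.TT_mult)
  show "\<And>x. x \<in> Bq.TT \<Longrightarrow> - x \<in> Bq.TT" by (rule Bq.TT_neg)
  show "\<And>a s. a \<in> Bq.TT \<Longrightarrow> s \<in> Bq.TT \<Longrightarrow> s \<noteq> 0 \<Longrightarrow> \<exists>u c. u \<in> Bq.TT \<and> c \<in> Bq.TT \<and> u \<noteq> 0 \<and> a * u = s * c"
    by (rule Bq.TT_ore)
  show "\<And>x y. x \<in> Bq.TT \<Longrightarrow> y \<in> Bq.TT \<Longrightarrow> fE (x + y) = fE x + fE y"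
  proof -
    fix x y assume "x \<in> Bq.TT" "y \<in> Bq.TT"
    then obtain c d where c: "Bq.valid c" "x = LcB Bq.basis c" and d: "Bq.valid d" "y = LcB Bq.basis d"
      unfolding Bq.TT_def by blast
    have "x + y = LcB Bq.basis (\<lambda>p. c p + d p)" using c d by (simp add: LcB_add Bq.valid_def)
    hence "fE (x + y) = LcB bas2 (\<lambda>p. c p + d p)" using fE_eq Bq.valid_add[OF c(1) d(1)] by simp
    also have "\<dots> = fE x + fE y" using c d fE_eq by (simp add: LcB_add Bq.valid_def)
    finally show "fE (x + y) = fE x + fE y" .
  qed
  show "\<And>x y. x \<in> Bq.TT \<Longrightarrow> y \<in> Bq.TT \<Longrightarrow> fE (x * y) = fE x * fE y"
  proof -
    fix x y assume "x \<in> Bq.TT" "y \<in> Bq.TT"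
    then obtain c d where c: "Bq.valid c" "x = LcB Bq.basis c" and d: "Bq.valid d" "y = LcB Bq.basis d"
      unfolding Bq.TT_def by blast
    have "x * y = LcB Bq.basis (conv Bq.kmul c d)" using c d
      by (simp add: LcB_mult Bq.basis_mult Bq.valid_def)
    hence "fE (x * y) = LcB bas2 (conv Bq.kmul c d)" using fE_eq Bq.valid_conv[OF c(1) d(1)] by simp
    also have "\<dots> = fE x * fE y" using c d fE_eq
      by (simp add: LcB_mult[symmetric] bas2_mult Bq.valid_def)
    finally show "fE (x * y) = fE x * fE y" .
  qed
  show "fE 1 = 1"
  proof -
    have "1 = LcB Bq.basis (\<lambda>p. if p = (0, \<lambda>_. 0) then 1 else 0)" by (simp add: LcB_delta Bq.basis_0)
    moreover have "Bq.valid (\<lambda>p. if p = (0, \<lambda>_. 0) then 1 else 0)" by (rule Bq.valid_delta) (simp add: Bq.Zm_zero)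
    ultimately have "fE 1 = LcB bas2 (\<lambda>p. if p = (0, \<lambda>_. 0) then 1 else 0)" using fE_eq by metis
    thus ?thesis by (simp add: LcB_delta bas2_def mulv_zero A.Xmon_zero)
  qed
  show "\<And>x. x \<in> Bq.TT \<Longrightarrow> x \<noteq> 0 \<Longrightarrow> fE x \<noteq> 0"
  proof -
    fix x assume "x \<in> Bq.TT" "x \<noteq> 0"
    then obtain c where c: "Bq.valid c" "x = LcB Bq.basis c" unfolding Bq.TT_def by blast
    show "fE x \<noteq> 0" using fE_eq[OF c(1)] fE_nz[OF c(1)] c(2) \<open>x \<noteq> 0\<close> by simp
  qed
qed

lemma fE_basis: "\<alpha> \<in> Zm m \<Longrightarrow> fE (Bq.basis (j, \<alpha>)) = va powi j * Xmon va m \<Lambda> X (mulv m (E e) \<alpha>)"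
proof -
  assume a: "\<alpha> \<in> Zm m"
  have "Bq.basis (j, \<alpha>) = LcB Bq.basis (\<lambda>p. if p = (j, \<alpha>) then 1 else 0)" by (simp add: LcB_delta)
  moreover have "Bq.valid (\<lambda>p. if p = (j, \<alpha>) then 1 else 0)" by (rule Bq.valid_delta) (simp add: a)
  ultimately have "fE (Bq.basis (j, \<alpha>)) = LcB bas2 (\<lambda>p. if p = (j, \<alpha>) then 1 else 0)" using fE_eq by metis
  thus ?thesis by (simp add: LcB_delta bas2_def)
qed

lemma exists_phi:
  "\<exists>\<phi>. alg_iso vb va \<phi> \<and> (\<forall>\<alpha>\<in>Zm m. \<phi> (Xmon vb m \<Lambda>' X' \<alpha>) = Xmon va m \<Lambda> X (mulv m (Emat B r k e) \<alpha>))"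
proof -
  interpret O: ore_setup Bq.TT fE by (rule ore_inst)
  have Fr: "O.Fr = UNIV"
  proof (rule qf_gen[OF a9])
    show "0 \<in> O.Fr" by (rule O.T_Fr[OF O.T0])
    show "1 \<in> O.Fr" by (rule O.T_Fr[OF O.T1])
    show "\<forall>x\<in>O.Fr. \<forall>y\<in>O.Fr. x + y \<in> O.Fr \<and> x * y \<in> O.Fr" using O.Fr_add O.Fr_mult by blast
    show "\<forall>x\<in>O.Fr. - x \<in> O.Fr \<and> inverse x \<in> O.Fr" using O.Fr_neg O.Fr_inv by blast
    show "vb \<in> O.Fr" by (rule O.T_Fr[OF Bq.TT_v])
    show "\<forall>i<m. X' i \<in> O.Fr" using O.T_Fr Bq.TT_X by blast
  qed
  have rg: "rhom O.g" by (rule O.g_hom[OF Fr])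
  have gX: "O.g (Xmon vb m \<Lambda>' X' \<alpha>) = Xmon va m \<Lambda> X (mulv m (E e) \<alpha>)" if a: "\<alpha> \<in> Zm m" for \<alpha>
  proof -
    have "Xmon vb m \<Lambda>' X' \<alpha> = Bq.basis (0, \<alpha>)" by (simp add: Bq.basis_def)
    moreover have "Bq.basis (0, \<alpha>) \<in> Bq.TT" using Bq.TT_basis a by simp
    ultimately show ?thesis using O.g_T fE_basis[OF a, of 0] by simp
  qed
  have gv: "O.g vb = va"
  proof -
    have "vb \<in> Bq.TT" by (rule Bq.TT_v)
    hence 1: "O.g vb = fE vb" by (rule O.g_T)
    have 2: "vb = Bq.basis (1, \<lambda>_. 0)" by (simp add: Bq.basis_v)
    have 3: "fE (Bq.basis (1, \<lambda>_. 0)) = va" using fE_basis[of "\<lambda>_. 0" 1] Bq.Zm_zero by (simp add: mulv_zero A.Xmon_zero)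
    show ?thesis using 1 2 3 by simp
  qed
  have surj: "surj O.g"
  proof (rule gen_surj[OF a7 rg])
    show "va \<in> range O.g" using gv by (metis rangeI)
    show "\<forall>i<m. X i \<in> range O.g"
    proof (intro allI impI)
      fix i assume i: "i < m"
      have "X i = Xmon va m \<Lambda> X (mulv m (E e) (mulv m (E e) (unitvec i)))"
        using E_invol[OF A.unitvec_Zm[OF i]] A.Xmon_unitvec[OF i] by simp
      also have "\<dots> = O.g (Xmon vb m \<Lambda>' X' (mulv m (E e) (unitvec i)))" using gX mulv_Zm by simp
      finally show "X i \<in> range O.g" by (metis rangeI)
    qed
  qed
  have "alg_iso vb va O.g"
    unfolding alg_iso_def alg_hom_def bij_def using rg gv surj rh_inj[OF rg]
    by (simp add: rhom_def)
  moreover have "\<forall>\<alpha>\<in>Zm m. O.g (Xmon vb m \<Lambda>' X' \<alpha>) = Xmon va m \<Lambda> X (mulv m (Emat B r k e) \<alpha>)"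
    using gX by (simp add: E_def)
  ultimately show ?thesis by blast
qed

end

lemma unique_phi:
  assumes "alg_iso vb va \<phi>1" "\<forall>\<alpha>\<in>Zm m. \<phi>1 (Xmon vb m \<Lambda>' X' \<alpha>) = Xmon va m \<Lambda> X (mulv m (Emat B r k e) \<alpha>)"
    and "alg_iso vb va \<phi>2" "\<forall>\<alpha>\<in>Zm m. \<phi>2 (Xmon vb m \<Lambda>' X' \<alpha>) = Xmon va m \<Lambda> X (mulv m (Emat B r k e) \<alpha>)"
  shows "\<phi>1 = \<phi>2"
proof (rule gen_eq[OF a9 alg_iso_rhom[OF assms(1)] alg_iso_rhom[OF assms(3)]])
  show "\<phi>1 vb = \<phi>2 vb" using assms(1,3) by (simp add: alg_iso_def alg_hom_def)
  show "\<forall>i<m. \<phi>1 (X' i) = \<phi>2 (X' i)"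
  proof (intro allI impI)
    fix i assume i: "i < m"
    have "\<phi>1 (Xmon vb m \<Lambda>' X' (unitvec i)) = \<phi>2 (Xmon vb m \<Lambda>' X' (unitvec i))"
      using assms(2,4) A.unitvec_Zm[OF i] by simp
    thus "\<phi>1 (X' i) = \<phi>2 (X' i)" using Bq.Xmon_unitvec[OF i] by simp
  qed
qed

end

theorem mainTheorem9:
  fixes m n k :: nat and \<epsilon> :: int
    and r :: "nat \<Rightarrow> nat" and h :: "nat \<Rightarrow> nat \<Rightarrow> int \<Rightarrow> int"
    and B \<Lambda> \<Lambda>' :: "nat \<Rightarrow> nat \<Rightarrow> int" and \<delta> :: "nat \<Rightarrow> int"
    and va :: "'a::division_ring" and X :: "nat \<Rightarrow> 'a"
    and vb :: "'b::division_ring" and X' :: "nat \<Rightarrow> 'b"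
    and \<mu> :: "'b \<Rightarrow> 'a"
  assumes "1 \<le> n" and "n \<le> m" and "k < n"
    and "\<epsilon> = 1 \<or> \<epsilon> = -1"
    and "mutation_data n r h"
    and "compatible_pair m n B \<Lambda> \<delta>"
    and "qtorus_frac va m \<Lambda> X"
    and "\<forall>i<m. \<forall>j<m. \<Lambda>' i j = matmul m (transp (Emat B r k 1)) (matmul m \<Lambda> (Emat B r k 1)) i j"
    and "qtorus_frac vb m \<Lambda>' X'"
    and "alg_iso vb va \<mu>"
    and "\<forall>i<m. i \<noteq> k \<longrightarrow> \<mu> (Xmon vb m \<Lambda>' X' (unitvec i)) = Xmon va m \<Lambda> X (unitvec i)"
    and "\<mu> (Xmon vb m \<Lambda>' X' (unitvec k)) =
           (\<Sum>s\<le>r k. lev va (h k s) *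
              Xmon va m \<Lambda> X (\<lambda>j. int s * pospart (col m B k) j
                                 + int (r k - s) * pospart (\<lambda>i. - col m B k i) j - unitvec k j))"
  shows "(\<exists>!\<phi>. alg_iso vb va \<phi> \<and>
             (\<forall>\<alpha>\<in>Zm m. \<phi> (Xmon vb m \<Lambda>' X' \<alpha>) = Xmon va m \<Lambda> X (mulv m (Emat B r k \<epsilon>) \<alpha>)))
       \<and> (\<forall>\<phi> \<psi>. alg_iso vb va \<phi> \<and>
             (\<forall>\<alpha>\<in>Zm m. \<phi> (Xmon vb m \<Lambda>' X' \<alpha>) = Xmon va m \<Lambda> X (mulv m (Emat B r k \<epsilon>) \<alpha>)) \<and>
             is_psi va m \<Lambda> X B \<delta> r h k \<epsilon> \<psi>
           \<longrightarrow> \<mu> = (if \<epsilon> = 1 then \<psi> else inv \<psi>) \<circ> \<phi>)"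
proof -
  interpret M: main m n k \<epsilon> r h B \<Lambda> \<Lambda>' \<delta> va X vb X' \<mu>
    by unfold_locales (use assms in auto)
  show ?thesis
  proof (intro conjI allI impI)
    show "\<exists>!\<phi>. alg_iso vb va \<phi> \<and>
             (\<forall>\<alpha>\<in>Zm m. \<phi> (Xmon vb m \<Lambda>' X' \<alpha>) = Xmon va m \<Lambda> X (mulv m (Emat B r k \<epsilon>) \<alpha>))"
      using M.exists_phi[OF M.a4] M.unique_phi by blast
  next
    fix \<phi> \<psi>
    assume "alg_iso vb va \<phi> \<and>
             (\<forall>\<alpha>\<in>Zm m. \<phi> (Xmon vb m \<Lambda>' X' \<alpha>) = Xmon va m \<Lambda> X (mulv m (Emat B r k \<epsilon>) \<alpha>)) \<and>
             is_psi va m \<Lambda> X B \<delta> r h k \<epsilon> \<psi>"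
    thus "\<mu> = (if \<epsilon> = 1 then \<psi> else inv \<psi>) \<circ> \<phi>" using M.second by blast
  qed
qed


end
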